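(* Let $\mathcal{L}$ be a finite set and $G\in\mathbb{R}_{\ge0}^{\mathcal{L}\times\mathcal{L}}$ a nonnegative matrix whose associated directed graph is strongly connected. Let $\eta>0$ and $D=\eta I$. Let $\beta,\beta^{\textsc{int}}:\mathbb{Z}_{\ge 0}\to(0,\infty)$ be bounded with limits $\beta_\infty$ and $\beta^{\textsc{int}}_\infty$ at infinity, and $\delta>0$. Consider the continuous-time Markov chain $\mathbf{X}(t)$ on $\mathbb{Z}_{\ge0}^{\mathcal{L}}$ in which, with $X(t)=\mathbf{1}^\top\mathbf{X}(t)$, for each $u$: $\mathbf{X}\to\mathbf{X}+\mathbf{e}_u$ at rate $\big[(\beta(X(t))G+\beta^{\textsc{int}}(X(t))D)\mathbf{X}(t)\big]_u$ and $\mathbf{X}\to\mathbf{X}-\mathbf{e}_u$ at rate $\delta[\mathbf{X}(t)]_u$. Let $T_{\mathbf{X}}$ be the hitting time of $\mathbf{0}$ from $\mathbf{X}$ and $\rho(G)$ the spectral radius of $G$. Then: (i) If $\beta_\infty\rho(G)+\beta^{\textsc{int}}_\infty\eta<\delta$, there is a constant $C>0$ with $\mathbb{E}[T_{\mathbf{X}}]\le C\ln n$ for every state $\mathbf{X}$ with $\mathbf{1}^\top\mathbf{X}=n\ge2$. (ii) If $\beta_\infty\rho(G)+\beta^{\textsc{int}}_\infty\eta>\delta$, then $\mathbb{E}[T_{\mathbf{X}}]=\infty$ for every state $\mathbf{X}\neq\mathbf{0}$.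
   Context: $\mathbf{e}_u$ is the standard basis vector at $u$, $[\cdot]_u$ the $u$th coordinate, $\mathbf{1}$ the all-ones vector, $I$ the identity matrix. *)

theory Defs
  imports "HOL-Analysis.Analysis"
begin

definition spec_rad :: "('l::finite \<Rightarrow> 'l \<Rightarrow> real) \<Rightarrow> real" where
  "spec_rad G = Max {cmod c | c. \<exists>v::'l \<Rightarrow> complex. (\<exists>w. v w \<noteq> 0) \<and>
      (\<forall>u. (\<Sum>w\<in>UNIV. complex_of_real (G u w) * v w) = c * v u)}"

definition strongly_connected :: "('l \<Rightarrow> 'l \<Rightarrow> real) \<Rightarrow> bool" where
  "strongly_connected G \<longleftrightarrow> (\<forall>u v. (u, v) \<in> {(a, b). G a b > 0}\<^sup>*)"

definition tot :: "('l::finite \<Rightarrow> nat) \<Rightarrow> nat" where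
  "tot x = (\<Sum>u\<in>UNIV. x u)"

definition birth_rate ::
  "(nat \<Rightarrow> real) \<Rightarrow> (nat \<Rightarrow> real) \<Rightarrow> ('l::finite \<Rightarrow> 'l \<Rightarrow> real) \<Rightarrow> real
    \<Rightarrow> ('l \<Rightarrow> nat) \<Rightarrow> 'l \<Rightarrow> real" where
  "birth_rate \<beta> \<beta>i G \<eta> x u =
     \<beta> (tot x) * (\<Sum>w\<in>UNIV. G u w * real (x w)) + \<beta>i (tot x) * \<eta> * real (x u)"

definition death_rate :: "real \<Rightarrow> ('l \<Rightarrow> nat) \<Rightarrow> 'l \<Rightarrow> real" where
  "death_rate \<delta> x u = \<delta> * real (x u)"

definition total_rate ::
  "(nat \<Rightarrow> real) \<Rightarrow> (nat \<Rightarrow> real) \<Rightarrow> ('l::finite \<Rightarrow> 'l \<Rightarrow> real) \<Rightarrow> real \<Rightarrow> real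
    \<Rightarrow> ('l \<Rightarrow> nat) \<Rightarrow> real" where
  "total_rate \<beta> \<beta>i G \<eta> \<delta> x = (\<Sum>u\<in>UNIV. birth_rate \<beta> \<beta>i G \<eta> x u + death_rate \<delta> x u)"

text \<open>One step of the embedded jump chain, killed at the state 0: maps the distribution
m of the (sub-probability) jump chain at step k to that at step k+1. The predecessors
of y are y - e_u (birth at u; only if y u > 0 and y - e_u is not the absorbing state 0)
and y + e_u (death at u).\<close>
definition jump_step ::
  "(nat \<Rightarrow> real) \<Rightarrow> (nat \<Rightarrow> real) \<Rightarrow> ('l::finite \<Rightarrow> 'l \<Rightarrow> real) \<Rightarrow> real \<Rightarrow> real
    \<Rightarrow> (('l \<Rightarrow> nat) \<Rightarrow> ennreal) \<Rightarrow> (('l \<Rightarrow> nat) \<Rightarrow> ennreal)" where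
  "jump_step \<beta> \<beta>i G \<eta> \<delta> m = (\<lambda>y. \<Sum>u\<in>UNIV.
      (if 0 < y u \<and> y(u := y u - 1) \<noteq> (\<lambda>_. 0)
       then m (y(u := y u - 1)) * ennreal (birth_rate \<beta> \<beta>i G \<eta> (y(u := y u - 1)) u
                                  / total_rate \<beta> \<beta>i G \<eta> \<delta> (y(u := y u - 1)))
       else 0)
      + m (y(u := y u + 1)) * ennreal (death_rate \<delta> (y(u := y u + 1)) u
                                  / total_rate \<beta> \<beta>i G \<eta> \<delta> (y(u := y u + 1))))"

text \<open>P(jump chain started at x0 is at y after k jumps without having visited 0 before).\<close>
definition hit_mass ::
  "(nat \<Rightarrow> real) \<Rightarrow> (nat \<Rightarrow> real) \<Rightarrow> ('l::finite \<Rightarrow> 'l \<Rightarrow> real) \<Rightarrow> real \<Rightarrow> real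
    \<Rightarrow> ('l \<Rightarrow> nat) \<Rightarrow> nat \<Rightarrow> ('l \<Rightarrow> nat) \<Rightarrow> ennreal" where
  "hit_mass \<beta> \<beta>i G \<eta> \<delta> x0 k = (jump_step \<beta> \<beta>i G \<eta> \<delta> ^^ k) (\<lambda>y. if y = x0 then 1 else 0)"

text \<open>Expected hitting time E[T_X] of 0 from x0 for the CTMC: the sum over jumps k
before absorption of the expected holding time 1/q(Y_k) in the current state Y_k of
the jump chain (value in [0, \<infinity>]).\<close>
definition exp_hit_time ::
  "(nat \<Rightarrow> real) \<Rightarrow> (nat \<Rightarrow> real) \<Rightarrow> ('l::finite \<Rightarrow> 'l \<Rightarrow> real) \<Rightarrow> real \<Rightarrow> real
    \<Rightarrow> ('l \<Rightarrow> nat) \<Rightarrow> ennreal" where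
  "exp_hit_time \<beta> \<beta>i G \<eta> \<delta> x0 =
     (\<Sum>k. \<integral>\<^sup>+ y. (if y = (\<lambda>_. 0) then 0
                  else hit_mass \<beta> \<beta>i G \<eta> \<delta> x0 k y / ennreal (total_rate \<beta> \<beta>i G \<eta> \<delta> y))
             \<partial>count_space UNIV)"

end

theory Submission
  imports Defs "Jordan_Normal_Form.Spectral_Radius"
begin


primrec mp :: "('l::finite \<Rightarrow> 'l \<Rightarrow> real) \<Rightarrow> nat \<Rightarrow> 'l \<Rightarrow> 'l \<Rightarrow> real" where
  "mp G 0 = (\<lambda>u v. if u = v then 1 else 0)"
| "mp G (Suc k) = (\<lambda>u v. \<Sum>w\<in>UNIV. mp G k u w * G w v)"

lemma mp_nonneg: assumes "\<forall>u v. 0 \<le> G u v" shows "0 \<le> mp G k u v"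
  using assms by (induction k arbitrary: u v) (auto intro!: sum_nonneg)

lemma mp_add: "mp G (k + m) u v = (\<Sum>w\<in>UNIV. mp G k u w * mp G m w v)"
proof (induction m arbitrary: v)
  case 0 then show ?case by (simp add: if_distrib cong: if_cong)
next
  case (Suc m)
  have "mp G (k + Suc m) u v = (\<Sum>w'\<in>UNIV. mp G (k+m) u w' * G w' v)" by simp
  also have "\<dots> = (\<Sum>w'\<in>UNIV. (\<Sum>w\<in>UNIV. mp G k u w * mp G m w w') * G w' v)" using Suc by simp
  also have "\<dots> = (\<Sum>w'\<in>UNIV. \<Sum>w\<in>UNIV. mp G k u w * (mp G m w w' * G w' v))"
    by (simp add: sum_distrib_right mult.assoc)
  also have "\<dots> = (\<Sum>w\<in>UNIV. \<Sum>w'\<in>UNIV. mp G k u w * (mp G m w w' * G w' v))"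
    by (rule sum.swap)
  also have "\<dots> = (\<Sum>w\<in>UNIV. mp G k u w * mp G (Suc m) w v)"
    by (simp add: sum_distrib_left)
  finally show ?case .
qed

lemma mp_eig:
  assumes "\<forall>u. (\<Sum>w\<in>UNIV. complex_of_real (G u w) * \<phi> w) = c * \<phi> u"
  shows "(\<Sum>w\<in>UNIV. complex_of_real (mp G k u w) * \<phi> w) = c^k * \<phi> u"
proof (induction k arbitrary: u)
  case 0
  have "(\<Sum>w\<in>UNIV. complex_of_real (mp G 0 u w) * \<phi> w) = (\<Sum>w\<in>UNIV. if u = w then \<phi> u else 0)"
    by (rule sum.cong) auto
  also have "\<dots> = \<phi> u" by simp
  finally show ?case by simp
next
  case (Suc k)
  have "(\<Sum>w\<in>UNIV. complex_of_real (mp G (Suc k) u w) * \<phi> w)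
     = (\<Sum>w\<in>UNIV. \<Sum>w'\<in>UNIV. complex_of_real (mp G k u w') * (complex_of_real (G w' w) * \<phi> w))"
    by (simp add: sum_distrib_right mult.assoc)
  also have "\<dots> = (\<Sum>w'\<in>UNIV. \<Sum>w\<in>UNIV. complex_of_real (mp G k u w') * (complex_of_real (G w' w) * \<phi> w))"
    by (rule sum.swap)
  also have "\<dots> = (\<Sum>w'\<in>UNIV. complex_of_real (mp G k u w') * (c * \<phi> w'))"
    using assms by (simp add: sum_distrib_left[symmetric])
  also have "\<dots> = c * (\<Sum>w'\<in>UNIV. complex_of_real (mp G k u w') * \<phi> w')"
    by (simp add: sum_distrib_left algebra_simps)
  also have "\<dots> = c^Suc k * \<phi> u" using Suc by simp
  finally show ?case .
qed

definition eigG :: "('l::finite \<Rightarrow> 'l \<Rightarrow> real) \<Rightarrow> complex \<Rightarrow> bool" where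
  "eigG G c \<longleftrightarrow> (\<exists>v::'l \<Rightarrow> complex. (\<exists>w. v w \<noteq> 0) \<and>
      (\<forall>u. (\<Sum>w\<in>UNIV. complex_of_real (G u w) * v w) = c * v u))"

lemma spec_rad_eq: "spec_rad G = Max {cmod c | c. eigG G c}"
  by (simp add: spec_rad_def eigG_def)

lemma transport:
  fixes G :: "'l::finite \<Rightarrow> 'l \<Rightarrow> real" and s :: real
  assumes s: "s > 0"
  obtains A :: "complex mat" and f :: "nat \<Rightarrow> 'l" where
    "A \<in> carrier_mat CARD('l) CARD('l)" "bij_betw f {0..<CARD('l)} UNIV"
    "\<And>c. eigenvalue A c \<longleftrightarrow> eigG G (complex_of_real s * c)"
    "\<And>k i j. i < CARD('l) \<Longrightarrow> j < CARD('l) \<Longrightarrow>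
        (A ^\<^sub>m k) $$ (i,j) = complex_of_real (mp G k (f i) (f j) / s^k)"
proof -
  define n where "n = CARD('l)"
  obtain f where f: "bij_betw f {0..<n} (UNIV::'l set)"
    using ex_bij_betw_nat_finite[of "UNIV::'l set"] unfolding n_def by auto
  define g where "g = the_inv_into {0..<n} f"
  have fg: "f (g u) = u" for u
    unfolding g_def using f by (simp add: f_the_inv_into_f_bij_betw)
  have gn: "g u < n" for u
    unfolding g_def using f bij_betw_the_inv_into bij_betwE by fastforce
  have gf: "i < n \<Longrightarrow> g (f i) = i" for i
    unfolding g_def using f by (simp add: bij_betw_def the_inv_into_f_f)
  have finj: "i < n \<Longrightarrow> j < n \<Longrightarrow> f i = f j \<longleftrightarrow> i = j" for i j
    using f unfolding bij_betw_def inj_on_def by auto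
  have reidx: "(\<Sum>l\<in>{0..<n}. h (f l)) = (\<Sum>w\<in>UNIV. h w)" for h :: "'l \<Rightarrow> complex"
    using sum.reindex_bij_betw[OF f, of h] .
  have reidxr: "(\<Sum>l\<in>{0..<n}. h (f l)) = (\<Sum>w\<in>UNIV. h w)" for h :: "'l \<Rightarrow> real"
    using sum.reindex_bij_betw[OF f, of h] .
  define A where "A = mat n n (\<lambda>(i,j). complex_of_real (G (f i) (f j) / s))"
  have Ac: "A \<in> carrier_mat n n" by (simp add: A_def)
  have pow: "(A ^\<^sub>m k) $$ (i,j) = complex_of_real (mp G k (f i) (f j) / s^k)"
    if "i < n" "j < n" for k i j
    using that(2)
  proof (induction k arbitrary: j)
    case 0
    then show ?case using that finj by (simp add: A_def)
  next
    case (Suc k)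
    have "(A ^\<^sub>m Suc k) $$ (i,j) = (\<Sum>l\<in>{0..<n}. (A ^\<^sub>m k) $$ (i,l) * A $$ (l,j))"
      using Suc.prems that Ac by (simp add: scalar_prod_def)
    also have "\<dots> = (\<Sum>l\<in>{0..<n}. complex_of_real (mp G k (f i) (f l) * G (f l) (f j) / s^Suc k))"
      using Suc.IH Suc.prems by (intro sum.cong) (auto simp: A_def)
    also have "\<dots> = complex_of_real ((\<Sum>l\<in>{0..<n}. mp G k (f i) (f l) * G (f l) (f j)) / s^Suc k)"
      by (simp add: sum_divide_distrib)
    also have "\<dots> = complex_of_real (mp G (Suc k) (f i) (f j) / s^Suc k)"
      using reidxr[of "\<lambda>w. mp G k (f i) w * G w (f j)"] by simp
    finally show ?case .
  qed
  have eig: "eigenvalue A c \<longleftrightarrow> eigG G (complex_of_real s * c)" for c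
  proof
    assume "eigenvalue A c"
    then obtain v where v: "v \<in> carrier_vec n" "v \<noteq> 0\<^sub>v n" "A *\<^sub>v v = c \<cdot>\<^sub>v v"
      unfolding eigenvalue_def eigenvector_def using Ac by auto
    define \<phi> where "\<phi> u = v $ g u" for u
    from v(1,2) obtain l where l: "l < n" "v $ l \<noteq> 0"
      by (metis carrier_vecD eq_vecI index_zero_vec(1) index_zero_vec(2))
    have ne: "\<exists>w. \<phi> w \<noteq> 0" using l gf by (intro exI[of _ "f l"]) (simp add: \<phi>_def)
    have "(\<Sum>w\<in>UNIV. complex_of_real (G u w) * \<phi> w) = complex_of_real s * c * \<phi> u" for u
    proof -
      have "(A *\<^sub>v v) $ (g u) = c * v $ (g u)" using v gn by simp
      moreover have "(A *\<^sub>v v) $ (g u) = (\<Sum>l\<in>{0..<n}. complex_of_real (G u (f l) / s) * v $ l)"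
        using v(1) gn fg by (simp add: scalar_prod_def A_def)
      moreover have "(\<Sum>w\<in>UNIV. complex_of_real (G u w) * \<phi> w)
          = (\<Sum>l\<in>{0..<n}. complex_of_real (G u (f l)) * v $ l)"
        unfolding reidx[symmetric] \<phi>_def using gf by (intro sum.cong) auto
      moreover have "(\<Sum>l\<in>{0..<n}. complex_of_real (G u (f l)) * v $ l)
          = complex_of_real s * (\<Sum>l\<in>{0..<n}. complex_of_real (G u (f l) / s) * v $ l)"
        using s by (simp add: sum_distrib_left)
      ultimately show ?thesis by (simp add: \<phi>_def)
    qed
    then show "eigG G (complex_of_real s * c)" unfolding eigG_def using ne by blast
  next
    assume "eigG G (complex_of_real s * c)"
    then obtain \<phi> :: "'l \<Rightarrow> complex" where ph: "\<exists>w. \<phi> w \<noteq> 0"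
      "\<And>u. (\<Sum>w\<in>UNIV. complex_of_real (G u w) * \<phi> w) = complex_of_real s * c * \<phi> u"
      unfolding eigG_def by blast
    define v where "v = vec n (\<lambda>l. \<phi> (f l))"
    have vc: "v \<in> carrier_vec n" by (simp add: v_def)
    from ph(1) obtain w where w: "\<phi> w \<noteq> 0" by blast
    have "v $ g w \<noteq> 0" using w gn fg by (simp add: v_def)
    then have vnz: "v \<noteq> 0\<^sub>v n" using gn by auto
    have "A *\<^sub>v v = c \<cdot>\<^sub>v v"
    proof (rule eq_vecI)
      fix i assume i: "i < dim_vec (c \<cdot>\<^sub>v v)"
      then have i': "i < n" by (simp add: v_def)
      have "(A *\<^sub>v v) $ i = (\<Sum>l\<in>{0..<n}. complex_of_real (G (f i) (f l) / s) * \<phi> (f l))"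
        using i' Ac by (simp add: scalar_prod_def A_def v_def)
      also have "\<dots> = (\<Sum>l\<in>{0..<n}. complex_of_real (G (f i) (f l)) * \<phi> (f l)) / complex_of_real s"
        by (simp add: sum_divide_distrib)
      also have "\<dots> = (\<Sum>w\<in>UNIV. complex_of_real (G (f i) w) * \<phi> w) / complex_of_real s"
        using reidx[of "\<lambda>w. complex_of_real (G (f i) w) * \<phi> w"] by simp
      also have "\<dots> = c * \<phi> (f i)" using ph(2) s by simp
      finally show "(A *\<^sub>v v) $ i = (c \<cdot>\<^sub>v v) $ i" using i' by (simp add: v_def)
    qed (simp add: A_def v_def)
    then show "eigenvalue A c" unfolding eigenvalue_def eigenvector_def
      using vc vnz Ac by auto
  qed
  show thesis
    by (rule that[of A f]) (use Ac f eig pow in \<open>auto simp: n_def\<close>)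
qed

lemma spec_facts:
  fixes G :: "'l::finite \<Rightarrow> 'l \<Rightarrow> real"
  shows "finite {cmod c | c. eigG G c}" "{cmod c | c. eigG G c} \<noteq> {}"
proof -
  obtain A :: "complex mat" and f :: "nat \<Rightarrow> 'l" where
    Ac: "A \<in> carrier_mat CARD('l) CARD('l)" and
    eig: "\<And>c. eigenvalue A c \<longleftrightarrow> eigG G (complex_of_real 1 * c)"
    apply (rule transport[of "1::real" G])
     apply simp
    apply blast
    done
  have eq: "{cmod c | c. eigG G c} = norm ` spectrum A"
    using eig by (auto simp: spectrum_def)
  show "finite {cmod c | c. eigG G c}" unfolding eq using card_finite_spectrum(1)[OF Ac] by simp
  show "{cmod c | c. eigG G c} \<noteq> {}" unfolding eq using spectrum_non_empty[OF Ac] by simp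
qed

lemma spec_rad_ge: "eigG G c \<Longrightarrow> cmod c \<le> spec_rad G"
  unfolding spec_rad_eq using spec_facts[of G] by (intro Max_ge) auto

lemma spec_rad_attained: "\<exists>c. eigG G c \<and> cmod c = spec_rad G"
proof -
  have "spec_rad G \<in> {cmod c | c. eigG G c}"
    unfolding spec_rad_eq using spec_facts[of G] by (intro Max_in) auto
  then show ?thesis by auto
qed

lemma spec_rad_nonneg: "0 \<le> spec_rad G"
  using spec_rad_attained[of G] by (metis norm_ge_zero)

lemma pow_bound:
  fixes G :: "'l::finite \<Rightarrow> 'l \<Rightarrow> real"
  assumes "spec_rad G < s" shows "\<exists>C. \<forall>k u v. \<bar>mp G k u v\<bar> \<le> C * s^k"
proof -
  have s: "s > 0" using assms spec_rad_nonneg[of G] by linarith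
  obtain A :: "complex mat" and f :: "nat \<Rightarrow> 'l" where
    Ac: "A \<in> carrier_mat CARD('l) CARD('l)" and f: "bij_betw f {0..<CARD('l)} UNIV" and
    eig: "\<And>c. eigenvalue A c \<longleftrightarrow> eigG G (complex_of_real s * c)" and
    pow: "\<And>k i j. i < CARD('l) \<Longrightarrow> j < CARD('l) \<Longrightarrow>
        (A ^\<^sub>m k) $$ (i,j) = complex_of_real (mp G k (f i) (f j) / s^k)"
    using transport[OF s, of G] by metis
  have n: "CARD('l) > 0" by simp
  obtain c where c: "c \<in> spectrum A" "spectral_radius A = norm c"
    using spectral_radius_mem_max(1)[OF Ac n] by auto
  have "eigG G (complex_of_real s * c)" using c(1) eig by (simp add: spectrum_def)
  then have "cmod (complex_of_real s * c) \<le> spec_rad G" by (rule spec_rad_ge)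
  then have h: "s * norm c \<le> spec_rad G" using s by (simp add: norm_mult)
  have "norm c < 1"
  proof (rule ccontr)
    assume "\<not> norm c < 1"
    then have "s * 1 \<le> s * norm c" using s by (intro mult_left_mono) auto
    then show False using h assms by simp
  qed
  then have "spectral_radius A < 1" using c(2) by simp
  then obtain C where C: "\<And>k. norm_bound (A ^\<^sub>m k) C"
    using spectral_radius_jnf_norm_bound_less_1_upper_triangular[OF Ac] by blast
  have "\<bar>mp G k u v\<bar> \<le> C * s^k" for k u v
  proof -
    obtain i where i: "i < CARD('l)" "f i = u" using f by (metis atLeastLessThan_iff bij_betw_iff_bijections iso_tuple_UNIV_I)
    obtain j where j: "j < CARD('l)" "f j = v" using f by (metis atLeastLessThan_iff bij_betw_iff_bijections iso_tuple_UNIV_I)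
    have "norm ((A ^\<^sub>m k) $$ (i,j)) \<le> C" using C[of k] i j Ac unfolding norm_bound_def by auto
    moreover have e: "(A ^\<^sub>m k) $$ (i,j) = complex_of_real (mp G k u v / s^k)"
      using pow[OF i(1) j(1), of k] i j by simp
    ultimately have "norm (complex_of_real (mp G k u v / s^k)) \<le> C" by simp
    then have "\<bar>mp G k u v / s^k\<bar> \<le> C" by (simp only: norm_of_real)
    then have "\<bar>mp G k u v\<bar> / s^k \<le> C" using s by (simp add: abs_divide)
    then show ?thesis using s by (simp add: pos_divide_le_eq)
  qed
  then show ?thesis by blast
qed

lemma LA1:
  fixes G :: "'l::finite \<Rightarrow> 'l \<Rightarrow> real"
  assumes nn: "\<forall>u v. 0 \<le> G u v" and r: "spec_rad G < r"
  shows "\<exists>w. (\<forall>u. w u > 0) \<and> (\<forall>v. (\<Sum>u\<in>UNIV. w u * G u v) \<le> r * w v)"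
proof -
  define s where "s = (spec_rad G + r) / 2"
  have s0: "0 < s" and sr: "s < r" and rs: "spec_rad G < s" using r spec_rad_nonneg[of G] by (auto simp: s_def)
  have r0: "r > 0" using s0 sr by simp
  obtain C where C: "\<And>k u v. \<bar>mp G k u v\<bar> \<le> C * s^k" using pow_bound[OF rs] by blast
  have C0: "C \<ge> 0" using C[of 0 undefined undefined] by simp
  define L where "L = real CARD('l)"
  have "\<exists>n. (s/r)^n < 1 / (L*C+1)"
    using s0 sr C0 by (intro real_arch_pow_inv) (auto simp: L_def intro!: add_nonneg_pos)
  then obtain K where K: "(s/r)^K < 1 / (L*C+1)" by blast
  have "(s/r)^Suc K \<le> (s/r)^K" using s0 sr by (intro power_decreasing) auto
  moreover have D: "L*C+1 > 0" using C0 by (simp add: L_def add_nonneg_pos)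
  moreover have "(s/r)^K * (L*C+1) < 1" using K D by (simp add: pos_less_divide_eq)
  ultimately have K': "(s/r)^Suc K * (L*C+1) \<le> 1"
    by (meson less_eq_real_def mult_right_mono order_trans)
  define c where "c k v = (\<Sum>u\<in>UNIV. mp G k u v) / r^k" for k v
  define w where "w v = (\<Sum>k\<le>K. c k v)" for v
  have cnn: "c k v \<ge> 0" for k v unfolding c_def using mp_nonneg[OF nn] r0 by (auto intro!: sum_nonneg divide_nonneg_pos)
  have c0: "c 0 v = 1" for v unfolding c_def by simp
  have cK: "c (Suc K) v \<le> 1" for v
  proof -
    have "(\<Sum>u\<in>UNIV. mp G (Suc K) u v) \<le> (\<Sum>u\<in>(UNIV::'l set). C * s^Suc K)"
      using C by (intro sum_mono) (metis abs_le_D1)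
    also have "\<dots> = L * C * s^Suc K" by (simp add: L_def)
    finally have "c (Suc K) v \<le> L * C * (s/r)^Suc K" using r0 unfolding c_def
      by (simp add: divide_le_eq power_divide)
    also have "\<dots> \<le> (s/r)^Suc K * (L*C+1)"
    proof -
      have a0: "0 \<le> (s/r)^Suc K" using s0 r0 by simp
      have g: "\<And>a::real. a * (L*C+1) = L*C*a + a" by (simp add: algebra_simps)
      have "(s/r)^Suc K * (L*C+1) = L * C * (s/r)^Suc K + (s/r)^Suc K" by (rule g)
      then show ?thesis using a0 by linarith
    qed
    finally show ?thesis using K' by simp
  qed
  have step: "(\<Sum>u\<in>UNIV. c k u * G u v) = r * c (Suc k) v" for k v
  proof -
    have "(\<Sum>u\<in>UNIV. c k u * G u v) = (\<Sum>u\<in>UNIV. \<Sum>u'\<in>UNIV. mp G k u' u * G u v) / r^k"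
      unfolding c_def by (simp add: sum_divide_distrib sum_distrib_right)
    also have "\<dots> = (\<Sum>u'\<in>UNIV. \<Sum>u\<in>UNIV. mp G k u' u * G u v) / r^k"
      by (subst sum.swap) simp
    also have "\<dots> = (\<Sum>u'\<in>UNIV. mp G (Suc k) u' v) / r^k" by simp
    also have "\<dots> = r * c (Suc k) v" unfolding c_def using r0 by (simp add: field_simps)
    finally show ?thesis .
  qed
  have "(\<Sum>u\<in>UNIV. w u * G u v) \<le> r * w v" for v
  proof -
    have "(\<Sum>u\<in>UNIV. w u * G u v) = (\<Sum>k\<le>K. \<Sum>u\<in>UNIV. c k u * G u v)"
      unfolding w_def by (simp add: sum_distrib_right) (rule sum.swap)
    also have "\<dots> = r * (\<Sum>k\<le>K. c (Suc k) v)" using step by (simp add: sum_distrib_left)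
    also have "(\<Sum>k\<le>K. c (Suc k) v) = w v + c (Suc K) v - 1"
      unfolding w_def using sum.atMost_Suc_shift[of "\<lambda>k. c k v" K] c0 by simp
    finally have eq: "(\<Sum>u\<in>UNIV. w u * G u v) = r * (w v + c (Suc K) v - 1)" .
    have "r * c (Suc K) v \<le> r * 1" using cK[of v] r0 by (intro mult_left_mono) auto
    then show ?thesis unfolding eq by (simp add: algebra_simps)
  qed
  moreover have "w u > 0" for u
  proof -
    have "c 0 u \<le> w u" unfolding w_def using cnn by (intro member_le_sum) auto
    then show ?thesis using c0 by simp
  qed
  ultimately show ?thesis by blast
qed

lemma reach_mp:
  fixes G :: "'l::finite \<Rightarrow> 'l \<Rightarrow> real"
  assumes nn: "\<forall>u v. 0 \<le> G u v" and sc: "strongly_connected G"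
  shows "\<exists>m. mp G m x y > 0"
proof -
  have "(x, y) \<in> {(a, b). G a b > 0}\<^sup>*" using sc unfolding strongly_connected_def by blast
  then show ?thesis
  proof (induction rule: rtrancl_induct)
    case base
    then show ?case by (intro exI[of _ 0]) simp
  next
    case (step y z)
    then obtain m where m: "mp G m x y > 0" by blast
    have "mp G m x y * G y z \<le> (\<Sum>w\<in>UNIV. mp G m x w * G w z)"
      using mp_nonneg[OF nn] nn by (intro member_le_sum) auto
    moreover have "mp G m x y * G y z > 0" using m step(2) by simp
    ultimately show ?case by (intro exI[of _ "Suc m"]) simp
  qed
qed

lemma LA2:
  fixes G :: "'l::finite \<Rightarrow> 'l \<Rightarrow> real"
  assumes nn: "\<forall>u v. 0 \<le> G u v" and sc: "strongly_connected G"
    and r0: "0 < r" and r: "r < spec_rad G"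
  shows "\<exists>w. (\<forall>u. w u > 0) \<and> (\<forall>v. r * w v \<le> (\<Sum>u\<in>UNIV. w u * G u v))"
proof -
  define \<rho> where "\<rho> = spec_rad G"
  define s where "s = (r + \<rho>) / 2"
  have s0: "0 < s" and rs: "r < s" and sp: "s < \<rho>" using r r0 by (auto simp: s_def \<rho>_def)
  obtain c where c: "eigG G c" "cmod c = \<rho>" using spec_rad_attained[of G] unfolding \<rho>_def by blast
  then obtain \<phi> :: "'l \<Rightarrow> complex" where ph: "\<exists>w. \<phi> w \<noteq> 0"
      "\<forall>u. (\<Sum>w\<in>UNIV. complex_of_real (G u w) * \<phi> w) = c * \<phi> u"
    unfolding eigG_def by blast
  obtain i where i: "\<phi> i \<noteq> 0" using ph(1) by blast
  define \<Phi> where "\<Phi> = (\<Sum>w\<in>UNIV. cmod (\<phi> w))"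
  have Phi_ge: "cmod (\<phi> w) \<le> \<Phi>" for w
    unfolding \<Phi>_def by (intro member_le_sum) auto
  have Phi0: "\<Phi> > 0"
  proof -
    have "0 < cmod (\<phi> i)" using i by simp
    then show ?thesis using Phi_ge[of i] by linarith
  qed
  define a where "a = cmod (\<phi> i) / \<Phi>"
  have a0: "a > 0" using i Phi0 by (simp add: a_def)
  have rowlow: "a * \<rho>^k \<le> (\<Sum>w\<in>UNIV. mp G k i w)" for k
  proof -
    have "\<rho>^k * cmod (\<phi> i) = cmod (c^k * \<phi> i)" using c(2) by (simp add: norm_mult norm_power)
    also have "\<dots> = cmod (\<Sum>w\<in>UNIV. complex_of_real (mp G k i w) * \<phi> w)"
      using mp_eig[OF ph(2)] by simp
    also have "\<dots> \<le> (\<Sum>w\<in>UNIV. cmod (complex_of_real (mp G k i w) * \<phi> w))"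
      by (rule norm_sum)
    also have "\<dots> = (\<Sum>w\<in>UNIV. mp G k i w * cmod (\<phi> w))"
      using mp_nonneg[OF nn] by (simp add: norm_mult)
    also have "\<dots> \<le> (\<Sum>w\<in>UNIV. mp G k i w * \<Phi>)"
      using mp_nonneg[OF nn] Phi_ge by (intro sum_mono mult_left_mono) auto
    finally have "\<rho>^k * cmod (\<phi> i) \<le> (\<Sum>w\<in>UNIV. mp G k i w) * \<Phi>"
      by (simp add: sum_distrib_right)
    then show ?thesis using Phi0 unfolding a_def by (simp add: field_simps)
  qed
  define mm where "mm xy = (SOME m. mp G m (fst xy) (snd xy) > 0)" for xy :: "'l \<times> 'l"
  have mm: "mp G (mm (x,y)) x y > 0" for x y
    unfolding mm_def using reach_mp[OF nn sc, of x y] by (simp, rule someI_ex)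
  define M where "M = Suc (Max (range mm))"
  have mmM: "mm (x,y) < M" for x y unfolding M_def by (simp add: le_imp_less_Suc)
  define P where "P x y = (\<Sum>m<M. mp G m x y / s^m)" for x y
  have Ppos: "P x y > 0" for x y
  proof -
    have "mp G (mm (x,y)) x y / s^(mm (x,y)) \<le> P x y"
      unfolding P_def using mmM[of x y] mp_nonneg[OF nn] s0
      by (intro member_le_sum) auto
    moreover have "mp G (mm (x,y)) x y / s^(mm (x,y)) > 0" using mm s0 by simp
    ultimately show ?thesis by simp
  qed
  define pmin where "pmin = Min (range (\<lambda>xy. P (fst xy) (snd xy)))"
  have pmin_le: "pmin \<le> P x y" for x y unfolding pmin_def
    by (rule Min_le) (auto intro!: image_eqI[of _ _ "(x,y)"])
  have pmin0: "pmin > 0" unfolding pmin_def using Ppos by (subst Min_gr_iff) auto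
  define cc where "cc k v = (\<Sum>u\<in>UNIV. mp G k u v) / s^k" for k v
  have cnn: "cc k v \<ge> 0" for k v unfolding cc_def using mp_nonneg[OF nn] s0
    by (auto intro!: sum_nonneg divide_nonneg_pos)
  have cc_ge: "mp G k i v / s^k \<le> cc k v" for k v
    unfolding cc_def using s0 mp_nonneg[OF nn]
    by (intro divide_right_mono member_le_sum) auto
  have colbound: "pmin * a * real K \<le> real M * (\<Sum>j<K+M. cc j v)" for K v
  proof -
    have "pmin * a * real K \<le> pmin * a * (\<Sum>k<K. (\<rho>/s)^k)"
    proof -
      have "(\<Sum>k<K. (1::real)) \<le> (\<Sum>k<K. (\<rho>/s)^k)"
        using s0 sp by (intro sum_mono one_le_power) auto
      then show ?thesis using pmin0 a0 by (intro mult_left_mono) auto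
    qed
    also have "\<dots> = (\<Sum>k<K. pmin * (a * \<rho>^k) / s^k)"
      by (simp add: sum_distrib_left power_divide mult.assoc)
    also have "\<dots> \<le> (\<Sum>k<K. pmin * (\<Sum>w\<in>UNIV. mp G k i w) / s^k)"
    proof (rule sum_mono)
      fix k assume "k \<in> {..<K}"
      show "pmin * (a * \<rho>^k) / s^k \<le> pmin * (\<Sum>w\<in>UNIV. mp G k i w) / s^k"
        using rowlow[of k] pmin0 s0 by (intro divide_right_mono mult_left_mono) auto
    qed
    also have "\<dots> = (\<Sum>k<K. \<Sum>w\<in>UNIV. (mp G k i w / s^k) * pmin)"
      by (simp add: sum_distrib_left sum_distrib_right sum_divide_distrib mult.commute)
    also have "\<dots> \<le> (\<Sum>k<K. \<Sum>w\<in>UNIV. (mp G k i w / s^k) * P w v)"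
      using pmin_le mp_nonneg[OF nn] s0 by (intro sum_mono mult_left_mono) auto
    also have "\<dots> = (\<Sum>k<K. \<Sum>m<M. \<Sum>w\<in>UNIV. mp G k i w * mp G m w v / s^(k+m))"
      unfolding P_def by (simp add: sum_distrib_left sum_distrib_right power_add)
        (intro sum.cong refl, subst sum.swap, simp add: mult.commute)
    also have "\<dots> = (\<Sum>m<M. \<Sum>k<K. mp G (k+m) i v / s^(k+m))"
      by (subst sum.swap) (simp add: mp_add sum_divide_distrib)
    also have "\<dots> \<le> (\<Sum>m<M. \<Sum>j<K+M. mp G j i v / s^j)"
    proof (intro sum_mono)
      fix m assume m: "m \<in> {..<M}"
      have "(\<Sum>k<K. mp G (k+m) i v / s^(k+m)) = (\<Sum>j\<in>(\<lambda>k. k+m) ` {..<K}. mp G j i v / s^j)"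
        by (subst sum.reindex) (auto simp: inj_on_def)
      also have "\<dots> \<le> (\<Sum>j<K+M. mp G j i v / s^j)"
        using m mp_nonneg[OF nn] s0 by (intro sum_mono2) auto
      finally show "(\<Sum>k<K. mp G (k+m) i v / s^(k+m)) \<le> (\<Sum>j<K+M. mp G j i v / s^j)" .
    qed
    also have "\<dots> = real M * (\<Sum>j<K+M. mp G j i v / s^j)" by simp
    also have "\<dots> \<le> real M * (\<Sum>j<K+M. cc j v)"
      using cc_ge by (intro mult_left_mono sum_mono) auto
    finally show ?thesis .
  qed
  have step: "(\<Sum>u\<in>UNIV. cc k u * G u v) = s * cc (Suc k) v" for k v
  proof -
    have "(\<Sum>u\<in>UNIV. cc k u * G u v) = (\<Sum>u\<in>UNIV. \<Sum>u'\<in>UNIV. mp G k u' u * G u v) / s^k"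
      unfolding cc_def by (simp add: sum_divide_distrib sum_distrib_right)
    also have "\<dots> = (\<Sum>u'\<in>UNIV. \<Sum>u\<in>UNIV. mp G k u' u * G u v) / s^k"
      by (subst sum.swap) simp
    also have "\<dots> = (\<Sum>u'\<in>UNIV. mp G (Suc k) u' v) / s^k" by simp
    also have "\<dots> = s * cc (Suc k) v" unfolding cc_def using s0 by (simp add: field_simps)
    finally show ?thesis .
  qed
  have M0: "M > 0" unfolding M_def by simp
  obtain K :: nat where K: "s / (s - r) * real M / (pmin * a) < real K" using reals_Archimedean2 by blast
  define N where "N = K + M"
  define w where "w v = (\<Sum>j<N. cc j v)" for v
  have wbig: "s / (s - r) \<le> w v" for v
  proof -
    have pa: "0 < pmin * a" using pmin0 a0 by simp
    have "s / (s - r) * real M < real K * (pmin * a)" using K unfolding pos_divide_less_eq[OF pa] .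
    then have "s / (s - r) * real M < pmin * a * real K" by (metis mult.commute)
    also have "\<dots> \<le> real M * w v" using colbound[of K v] unfolding w_def N_def .
    finally have "s / (s - r) * real M < real M * w v" .
    then have "s / (s - r) < w v" using M0 by (metis mult.commute mult_less_cancel_left_pos of_nat_0_less_iff)
    then show ?thesis by simp
  qed
  have "r * w v \<le> (\<Sum>u\<in>UNIV. w u * G u v)" for v
  proof -
    have "(\<Sum>u\<in>UNIV. w u * G u v) = (\<Sum>j<N. \<Sum>u\<in>UNIV. cc j u * G u v)"
      unfolding w_def by (simp add: sum_distrib_right) (rule sum.swap)
    also have "\<dots> = s * (\<Sum>j<N. cc (Suc j) v)" using step by (simp add: sum_distrib_left)
    also have "(\<Sum>j<N. cc (Suc j) v) = w v + cc N v - 1"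
      unfolding w_def using sum.lessThan_Suc_shift[of "\<lambda>k. cc k v" N] by (simp add: cc_def)
    finally have eq: "(\<Sum>u\<in>UNIV. w u * G u v) = s * (w v + cc N v - 1)" .
    have "s * (w v - 1) \<le> s * (w v + cc N v - 1)" using cnn[of N v] s0 by (intro mult_left_mono) auto
    moreover have "r * w v \<le> s * (w v - 1)"
    proof -
      have "s \<le> (s - r) * w v" using wbig[of v] rs by (simp add: divide_le_eq mult.commute)
      then show ?thesis by (simp add: algebra_simps)
    qed
    ultimately show ?thesis unfolding eq by linarith
  qed
  moreover have "w u > 0" for u
  proof -
    have "1 \<le> s / (s - r)" using rs s0 r0 by simp
    then show ?thesis using wbig[of u] by linarith
  qed
  ultimately show ?thesis by blast
qed



locale chain =
  fixes \<beta> \<beta>i :: "nat \<Rightarrow> real" and G :: "'l::finite \<Rightarrow> 'l \<Rightarrow> real" and \<eta> \<delta> :: real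
  assumes G_nonneg: "\<forall>u v. 0 \<le> G u v" and eta_pos: "\<eta> > 0" and beta_pos: "\<forall>n. \<beta> n > 0"
    and betai_pos: "\<forall>n. \<beta>i n > 0" and delta_pos: "\<delta> > 0"
begin

abbreviation "bb \<equiv> birth_rate \<beta> \<beta>i G \<eta>"
abbreviation "dd \<equiv> death_rate \<delta>"
abbreviation "qq \<equiv> total_rate \<beta> \<beta>i G \<eta> \<delta>"
abbreviation "JJ \<equiv> jump_step \<beta> \<beta>i G \<eta> \<delta>"

definition PF :: "(('l \<Rightarrow> nat) \<Rightarrow> ennreal) \<Rightarrow> ('l \<Rightarrow> nat) \<Rightarrow> ennreal" where
  "PF f x = (\<Sum>u\<in>UNIV. ennreal (bb x u / qq x) * f (x(u := x u + 1))
      + ennreal (dd x u / qq x) * f (x(u := x u - 1)))"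

lemma bb_nonneg: "0 \<le> bb x u"
  using G_nonneg beta_pos betai_pos eta_pos unfolding birth_rate_def
  by (intro add_nonneg_nonneg mult_nonneg_nonneg sum_nonneg) (auto simp: less_imp_le)

lemma bb_pos: "0 < x u \<Longrightarrow> 0 < bb x u"
proof -
  assume "0 < x u"
  have "0 \<le> \<beta> (tot x) * (\<Sum>w\<in>UNIV. G u w * real (x w))"
    using G_nonneg beta_pos by (intro mult_nonneg_nonneg sum_nonneg) (auto simp: less_imp_le)
  moreover have "0 < \<beta>i (tot x) * \<eta> * real (x u)" using \<open>0 < x u\<close> betai_pos eta_pos by simp
  ultimately show ?thesis unfolding birth_rate_def by linarith
qed

lemma dd_nonneg: "0 \<le> dd x u" using delta_pos by (simp add: death_rate_def)

lemma qq_eq: "qq x = (\<Sum>u\<in>UNIV. bb x u) + (\<Sum>u\<in>UNIV. dd x u)"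
  unfolding total_rate_def by (simp add: sum.distrib)

lemma qq_pos: "x \<noteq> (\<lambda>_. 0) \<Longrightarrow> 0 < qq x"
proof -
  assume "x \<noteq> (\<lambda>_. 0)"
  then obtain u where u: "x u \<noteq> 0" by auto
  have "0 < dd x u" using u delta_pos by (simp add: death_rate_def)
  moreover have "dd x u \<le> (\<Sum>u\<in>UNIV. dd x u)" using dd_nonneg by (intro member_le_sum) auto
  moreover have "0 \<le> (\<Sum>u\<in>UNIV. bb x u)" using bb_nonneg by (intro sum_nonneg) auto
  ultimately show ?thesis unfolding qq_eq by linarith
qed

lemma bij_up: "bij_betw (\<lambda>x::'l \<Rightarrow> nat. x(u := x u + 1)) UNIV {y. 0 < y u}"
  by (rule bij_betwI[where g = "\<lambda>y. y(u := y u - 1)"]) (auto simp: fun_eq_iff)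

lemma duality:
  "(\<integral>\<^sup>+y. JJ m y * f y \<partial>count_space UNIV)
     = (\<integral>\<^sup>+x. (if x = (\<lambda>_. 0) then 0 else m x * PF f x) \<partial>count_space UNIV)"
proof -
  define pb where "pb x u = ennreal (bb x u / qq x)" for x u
  define pd where "pd x u = ennreal (dd x u / qq x)" for x u
  define Bt where "Bt u y = (if 0 < y u \<and> y(u := y u - 1) \<noteq> (\<lambda>_. 0)
      then m (y(u := y u - 1)) * pb (y(u := y u - 1)) u else 0) * f y" for u y
  define Dt where "Dt u y = m (y(u := y u + 1)) * pd (y(u := y u + 1)) u * f y" for u y
  have "(\<integral>\<^sup>+y. JJ m y * f y \<partial>count_space UNIV) = (\<integral>\<^sup>+y. (\<Sum>u\<in>UNIV. Bt u y + Dt u y) \<partial>count_space UNIV)"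
    unfolding jump_step_def Bt_def Dt_def pb_def pd_def
    by (simp add: sum_distrib_right distrib_right)
  also have "\<dots> = (\<Sum>u\<in>UNIV. (\<integral>\<^sup>+y. Bt u y \<partial>count_space UNIV) + (\<integral>\<^sup>+y. Dt u y \<partial>count_space UNIV))"
    by (simp add: nn_integral_sum nn_integral_add)
  also have "\<dots> = (\<Sum>u\<in>UNIV. (\<integral>\<^sup>+x. (if x = (\<lambda>_. 0) then 0 else m x * (pb x u * f (x(u := x u + 1)))) \<partial>count_space UNIV)
       + (\<integral>\<^sup>+x. (if x = (\<lambda>_. 0) then 0 else m x * (pd x u * f (x(u := x u - 1)))) \<partial>count_space UNIV))"
  proof (intro sum.cong refl arg_cong2[where f = "(+)"])
    fix u :: 'l
    define H where "H y = (if y(u := y u - 1) \<noteq> (\<lambda>_. 0)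
      then m (y(u := y u - 1)) * pb (y(u := y u - 1)) u else 0) * f y" for y
    have "(\<integral>\<^sup>+x. H (x(u := x u + 1)) \<partial>count_space UNIV) = (\<integral>\<^sup>+y. H y \<partial>count_space {y. 0 < y u})"
      by (rule nn_integral_bij_count_space[OF bij_up])
    also have "\<dots> = (\<integral>\<^sup>+y. H y * indicator {y. 0 < y u} y \<partial>count_space UNIV)"
      by (rule nn_integral_count_space_indicator) simp
    also have "\<dots> = (\<integral>\<^sup>+y. Bt u y \<partial>count_space UNIV)"
      by (intro nn_integral_cong) (auto simp: H_def Bt_def indicator_def)
    finally have 1: "(\<integral>\<^sup>+y. Bt u y \<partial>count_space UNIV) = (\<integral>\<^sup>+x. H (x(u := x u + 1)) \<partial>count_space UNIV)" ..
    have 2: "H (x(u := x u + 1)) = (if x = (\<lambda>_. 0) then 0 else m x * (pb x u * f (x(u := x u + 1))))" for x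
    proof -
      have "(x(u := x u + 1))(u := x u + 1 - 1) = x" by (simp add: fun_eq_iff)
      then show ?thesis by (simp add: H_def mult.assoc)
    qed
    show "(\<integral>\<^sup>+y. Bt u y \<partial>count_space UNIV) = (\<integral>\<^sup>+x. (if x = (\<lambda>_. 0) then 0 else m x * (pb x u * f (x(u := x u + 1)))) \<partial>count_space UNIV)"
      unfolding 1 2 ..
    define K where "K x = m x * (pd x u * f (x(u := x u - 1)))" for x
    have "(\<integral>\<^sup>+y. K (y(u := y u + 1)) \<partial>count_space UNIV) = (\<integral>\<^sup>+x. K x \<partial>count_space {x. 0 < x u})"
      by (rule nn_integral_bij_count_space[OF bij_up])
    also have "\<dots> = (\<integral>\<^sup>+x. K x * indicator {x. 0 < x u} x \<partial>count_space UNIV)"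
      by (rule nn_integral_count_space_indicator) simp
    also have "\<dots> = (\<integral>\<^sup>+x. (if x = (\<lambda>_. 0) then 0 else m x * (pd x u * f (x(u := x u - 1)))) \<partial>count_space UNIV)"
    proof (intro nn_integral_cong)
      fix x :: "'l \<Rightarrow> nat"
      show "K x * indicator {x. 0 < x u} x = (if x = (\<lambda>_. 0) then 0 else m x * (pd x u * f (x(u := x u - 1))))"
      proof (cases "0 < x u")
        case True
        then have "x \<noteq> (\<lambda>_. 0)" by auto
        then show ?thesis using True by (simp add: K_def)
      next
        case False
        then show ?thesis by (auto simp: K_def pd_def death_rate_def)
      qed
    qed
    finally have 3: "(\<integral>\<^sup>+y. K (y(u := y u + 1)) \<partial>count_space UNIV) = (\<integral>\<^sup>+x. (if x = (\<lambda>_. 0) then 0 else m x * (pd x u * f (x(u := x u - 1)))) \<partial>count_space UNIV)" .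
    have 4: "K (y(u := y u + 1)) = Dt u y" for y
    proof -
      have "(y(u := y u + 1))(u := y u + 1 - 1) = y" by (simp add: fun_eq_iff)
      then show ?thesis by (simp add: K_def Dt_def mult.assoc)
    qed
    show "(\<integral>\<^sup>+y. Dt u y \<partial>count_space UNIV) = (\<integral>\<^sup>+x. (if x = (\<lambda>_. 0) then 0 else m x * (pd x u * f (x(u := x u - 1)))) \<partial>count_space UNIV)"
      using 3 unfolding 4 .
  qed
  also have "\<dots> = (\<integral>\<^sup>+x. (\<Sum>u\<in>UNIV. (if x = (\<lambda>_. 0) then 0 else m x * (pb x u * f (x(u := x u + 1))))
       + (if x = (\<lambda>_. 0) then 0 else m x * (pd x u * f (x(u := x u - 1))))) \<partial>count_space UNIV)"
    by (simp add: nn_integral_sum nn_integral_add)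
  also have "\<dots> = (\<integral>\<^sup>+x. (if x = (\<lambda>_. 0) then 0 else m x * PF f x) \<partial>count_space UNIV)"
    by (intro nn_integral_cong) (simp add: PF_def pb_def pd_def sum_distrib_left distrib_left)
  finally show ?thesis .
qed

abbreviation "hm \<equiv> hit_mass \<beta> \<beta>i G \<eta> \<delta>"

lemma hm_Suc: "hm x0 (Suc k) = JJ (hm x0 k)"
  by (simp add: hit_mass_def)

lemma hm_0: "hm x0 0 = (\<lambda>y. if y = x0 then 1 else 0)"
  by (simp add: hit_mass_def)

lemma tot_upd: "tot (x(u := a)) + x u = tot x + a"
proof -
  have "tot x = x u + (\<Sum>v\<in>UNIV - {u}. x v)" unfolding tot_def by (rule sum.remove) auto
  moreover have "tot (x(u := a)) = (x(u := a)) u + (\<Sum>v\<in>UNIV - {u}. (x(u := a)) v)"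
    unfolding tot_def by (rule sum.remove) auto
  moreover have "(\<Sum>v\<in>UNIV - {u}. (x(u := a)) v) = (\<Sum>v\<in>UNIV - {u}. x v)"
    by (rule sum.cong) auto
  ultimately show ?thesis by simp
qed

lemma tot_zero_iff: "tot x = 0 \<longleftrightarrow> x = (\<lambda>_. 0)"
  unfolding tot_def by (auto simp: fun_eq_iff)

lemma support: "hm x0 k y \<noteq> 0 \<Longrightarrow> tot y \<le> tot x0 + k"
proof (induction k arbitrary: y)
  case 0
  then show ?case by (simp add: hm_0 split: if_splits)
next
  case (Suc k)
  from Suc.prems obtain u where u:
    "(if 0 < y u \<and> y(u := y u - 1) \<noteq> (\<lambda>_. 0)
       then hm x0 k (y(u := y u - 1)) * ennreal (bb (y(u := y u - 1)) u / qq (y(u := y u - 1))) else 0)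
      + hm x0 k (y(u := y u + 1)) * ennreal (dd (y(u := y u + 1)) u / qq (y(u := y u + 1))) \<noteq> 0"
    unfolding hm_Suc jump_step_def by (metis (no_types, lifting) sum.neutral)
  define A where "A = (if 0 < y u \<and> y(u := y u - 1) \<noteq> (\<lambda>_. 0)
       then hm x0 k (y(u := y u - 1)) * ennreal (bb (y(u := y u - 1)) u / qq (y(u := y u - 1))) else 0)"
  define B where "B = hm x0 k (y(u := y u + 1)) * ennreal (dd (y(u := y u + 1)) u / qq (y(u := y u + 1)))"
  have "A + B \<noteq> 0" using u unfolding A_def B_def .
  then have "A \<noteq> 0 \<or> B \<noteq> 0" by auto
  then show ?case
  proof
    assume "A \<noteq> 0"
    then have c: "0 < y u" and h: "hm x0 k (y(u := y u - 1)) \<noteq> 0"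
      unfolding A_def by (auto split: if_splits)
    then have "tot (y(u := y u - 1)) \<le> tot x0 + k" using Suc.IH by blast
    moreover have "tot (y(u := y u - 1)) + y u = tot y + (y u - 1)" by (rule tot_upd)
    ultimately show ?thesis using c by linarith
  next
    assume "B \<noteq> 0"
    then have "hm x0 k (y(u := y u + 1)) \<noteq> 0" unfolding B_def by auto
    then have "tot (y(u := y u + 1)) \<le> tot x0 + k" using Suc.IH by blast
    moreover have "tot (y(u := y u + 1)) + y u = tot y + (y u + 1)" by (rule tot_upd)
    ultimately show ?thesis by linarith
  qed
qed

lemma birth_step:
  assumes "x \<noteq> (\<lambda>_. 0)"
  shows "hm x0 k x * ennreal (bb x u / qq x) \<le> hm x0 (Suc k) (x(u := x u + 1))"
proof -
  let ?y = "x(u := x u + 1)"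
  have e: "?y(u := ?y u - 1) = x" by (simp add: fun_eq_iff)
  have "hm x0 k x * ennreal (bb x u / qq x) \<le>
     (if 0 < ?y u \<and> ?y(u := ?y u - 1) \<noteq> (\<lambda>_. 0)
       then hm x0 k (?y(u := ?y u - 1)) * ennreal (bb (?y(u := ?y u - 1)) u / qq (?y(u := ?y u - 1))) else 0)
      + hm x0 k (?y(u := ?y u + 1)) * ennreal (dd (?y(u := ?y u + 1)) u / qq (?y(u := ?y u + 1)))"
    using assms unfolding e by simp
  also have "\<dots> \<le> hm x0 (Suc k) ?y"
    unfolding hm_Suc jump_step_def by (rule member_le_sum) auto
  finally show ?thesis .
qed

lemma pump:
  assumes "0 < x0 u"
  shows "0 < hm x0 j (x0(u := x0 u + j))"
proof (induction j)
  case 0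
  then show ?case by (simp add: hm_0)
next
  case (Suc j)
  let ?z = "x0(u := x0 u + j)"
  have nz: "?z \<noteq> (\<lambda>_. 0)" using assms by (metis add_gr_0 fun_upd_same less_numeral_extra(3))
  have "0 < bb ?z u / qq ?z" using bb_pos[of ?z u] qq_pos[OF nz] assms by simp
  then have "ennreal (bb ?z u / qq ?z) \<noteq> 0" by (metis ennreal_eq_0_iff not_le)
  moreover have "hm x0 j ?z \<noteq> 0" using Suc.IH by (metis less_irrefl)
  ultimately have "0 < hm x0 j ?z * ennreal (bb ?z u / qq ?z)"
    by (metis mult_eq_0_iff zero_less_iff_neq_zero)
  also have "\<dots> \<le> hm x0 (Suc j) (?z(u := ?z u + 1))" by (rule birth_step[OF nz])
  also have "?z(u := ?z u + 1) = x0(u := x0 u + Suc j)" by simp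
  finally show ?case .
qed

lemma upper_bound:
  assumes x0: "x0 \<noteq> (\<lambda>_. 0)"
    and V: "\<And>x. x \<noteq> (\<lambda>_. 0) \<Longrightarrow> PF V x + 1 / ennreal (qq x) \<le> V x"
  shows "exp_hit_time \<beta> \<beta>i G \<eta> \<delta> x0 \<le> V x0"
proof -
  define I where "I k = (\<integral>\<^sup>+ y. (if y = (\<lambda>_. 0) then 0 else hm x0 k y / ennreal (qq y)) \<partial>count_space UNIV)" for k
  define R where "R k = (\<integral>\<^sup>+ y. (if y = (\<lambda>_. 0) then 0 else hm x0 k y * V y) \<partial>count_space UNIV)" for k
  have main: "(\<Sum>k<K. I k) + R K \<le> V x0" for K
  proof (induction K)
    case 0
    have "R 0 = (\<integral>\<^sup>+ y. V x0 * indicator {x0} y \<partial>count_space UNIV)"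
      unfolding R_def using x0 by (intro nn_integral_cong) (auto simp: hm_0)
    also have "\<dots> = V x0" by (simp add: nn_integral_cmult_indicator)
    finally show ?case by simp
  next
    case (Suc K)
    have "R (Suc K) \<le> (\<integral>\<^sup>+ y. hm x0 (Suc K) y * V y \<partial>count_space UNIV)"
      unfolding R_def by (intro nn_integral_mono) auto
    also have "\<dots> = (\<integral>\<^sup>+x. (if x = (\<lambda>_. 0) then 0 else hm x0 K x * PF V x) \<partial>count_space UNIV)"
      unfolding hm_Suc by (rule duality)
    finally have 1: "I K + R (Suc K) \<le> I K + (\<integral>\<^sup>+x. (if x = (\<lambda>_. 0) then 0 else hm x0 K x * PF V x) \<partial>count_space UNIV)"
      by (rule add_left_mono)
    also have "\<dots> = (\<integral>\<^sup>+x. (if x = (\<lambda>_. 0) then 0 else hm x0 K x / ennreal (qq x))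
        + (if x = (\<lambda>_. 0) then 0 else hm x0 K x * PF V x) \<partial>count_space UNIV)"
      unfolding I_def by (rule nn_integral_add[symmetric]) auto
    also have "\<dots> = (\<integral>\<^sup>+x. (if x = (\<lambda>_. 0) then 0 else hm x0 K x * (1 / ennreal (qq x) + PF V x)) \<partial>count_space UNIV)"
      by (intro nn_integral_cong) (simp add: distrib_left divide_ennreal_def)
    also have "\<dots> \<le> R K"
      unfolding R_def
    proof (intro nn_integral_mono)
      fix x :: "'l \<Rightarrow> nat"
      show "(if x = (\<lambda>_. 0) then 0 else hm x0 K x * (1 / ennreal (qq x) + PF V x))
          \<le> (if x = (\<lambda>_. 0) then 0 else hm x0 K x * V x)"
        using V[of x] by (auto intro!: mult_left_mono simp: add.commute)
    qed
    finally have 2: "I K + R (Suc K) \<le> R K" .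
    have "(\<Sum>k<Suc K. I k) + R (Suc K) = (\<Sum>k<K. I k) + (I K + R (Suc K))"
      by (simp add: add.assoc)
    also have "\<dots> \<le> (\<Sum>k<K. I k) + R K" using 2 by (rule add_left_mono)
    also have "\<dots> \<le> V x0" by (rule Suc.IH)
    finally show ?case .
  qed
  have "exp_hit_time \<beta> \<beta>i G \<eta> \<delta> x0 = (\<Sum>k. I k)"
    unfolding exp_hit_time_def I_def ..
  also have "\<dots> = (SUP K. \<Sum>k<K. I k)" by (rule suminf_eq_SUP)
  also have "\<dots> \<le> V x0"
  proof (rule SUP_least)
    fix K
    show "(\<Sum>k<K. I k) \<le> V x0" using main[of K] by (metis add_increasing2 le_iff_add order_trans zero_le)
  qed
  finally show ?thesis .
qed

lemma V_cond:
  assumes Vnn: "\<And>y. 0 \<le> V y" and x: "x \<noteq> (\<lambda>_. 0)"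
    and h: "(\<Sum>u\<in>UNIV. bb x u * V (x(u := x u + 1)) + dd x u * V (x(u := x u - 1))) + 1 \<le> qq x * V x"
  shows "PF (\<lambda>y. ennreal (V y)) x + 1 / ennreal (qq x) \<le> ennreal (V x)"
proof -
  have q: "0 < qq x" by (rule qq_pos[OF x])
  define S where "S = (\<Sum>u\<in>UNIV. bb x u / qq x * V (x(u := x u + 1)) + dd x u / qq x * V (x(u := x u - 1)))"
  have nn: "0 \<le> bb x u / qq x * V (x(u := x u + 1)) + dd x u / qq x * V (x(u := x u - 1))" for u
    using bb_nonneg dd_nonneg Vnn q by (intro add_nonneg_nonneg mult_nonneg_nonneg divide_nonneg_pos) auto
  have "PF (\<lambda>y. ennreal (V y)) x = ennreal S"
    unfolding PF_def S_def using nn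
    by (subst sum_ennreal[symmetric]) (auto intro!: sum.cong simp: ennreal_mult[symmetric] bb_nonneg dd_nonneg q Vnn
        divide_nonneg_pos less_imp_le ennreal_plus[symmetric] simp del: ennreal_plus)
  moreover have "1 / ennreal (qq x) = ennreal (1 / qq x)"
    using divide_ennreal[of 1 "qq x"] q by simp
  moreover have "S + 1 / qq x \<le> V x"
  proof -
    have "qq x * S = (\<Sum>u\<in>UNIV. bb x u * V (x(u := x u + 1)) + dd x u * V (x(u := x u - 1)))"
      unfolding S_def using q by (simp add: sum_distrib_left algebra_simps)
    then have "qq x * (S + 1 / qq x) \<le> qq x * V x" using h q by (simp add: algebra_simps)
    then show ?thesis using q by simp
  qed
  moreover have "0 \<le> S" unfolding S_def using nn by (intro sum_nonneg) auto
  ultimately have "PF (\<lambda>y. ennreal (V y)) x + 1 / ennreal (qq x) = ennreal (S + 1 / qq x)"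
    using q by (simp add: ennreal_plus[symmetric] del: ennreal_plus)
  then show ?thesis using \<open>S + 1 / qq x \<le> V x\<close> by (simp add: ennreal_leI)
qed

lemma U_cond:
  assumes Unn: "\<And>y. 0 \<le> U y" and x: "x \<noteq> (\<lambda>_. 0)"
    and h: "qq x * U x \<le> (\<Sum>u\<in>UNIV. bb x u * U (x(u := x u + 1)) + dd x u * U (x(u := x u - 1)))"
  shows "ennreal (U x) \<le> PF (\<lambda>y. ennreal (U y)) x"
proof -
  have q: "0 < qq x" by (rule qq_pos[OF x])
  define S where "S = (\<Sum>u\<in>UNIV. bb x u / qq x * U (x(u := x u + 1)) + dd x u / qq x * U (x(u := x u - 1)))"
  have nn: "0 \<le> bb x u / qq x * U (x(u := x u + 1)) + dd x u / qq x * U (x(u := x u - 1))" for u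
    using bb_nonneg dd_nonneg Unn q by (intro add_nonneg_nonneg mult_nonneg_nonneg divide_nonneg_pos) auto
  have "PF (\<lambda>y. ennreal (U y)) x = ennreal S"
    unfolding PF_def S_def using nn
    by (subst sum_ennreal[symmetric]) (auto intro!: sum.cong simp: ennreal_mult[symmetric] bb_nonneg dd_nonneg q Unn
        divide_nonneg_pos less_imp_le ennreal_plus[symmetric] simp del: ennreal_plus)
  moreover have "U x \<le> S"
  proof -
    have "qq x * S = (\<Sum>u\<in>UNIV. bb x u * U (x(u := x u + 1)) + dd x u * U (x(u := x u - 1)))"
      unfolding S_def using q by (simp add: sum_distrib_left algebra_simps)
    then have "qq x * U x \<le> qq x * S" using h by simp
    then show ?thesis using q by simp
  qed
  ultimately show ?thesis by (simp add: ennreal_leI)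
qed

lemma incr:
  assumes U0: "U (\<lambda>_. 0) = 0" and Us: "\<And>x. x \<noteq> (\<lambda>_. 0) \<Longrightarrow> U x \<le> PF U x"
  shows "(\<integral>\<^sup>+y. hm x0 k y * U y \<partial>count_space UNIV) \<le> (\<integral>\<^sup>+y. hm x0 (Suc k) y * U y \<partial>count_space UNIV)"
proof -
  have "(\<integral>\<^sup>+y. hm x0 k y * U y \<partial>count_space UNIV)
      = (\<integral>\<^sup>+x. (if x = (\<lambda>_. 0) then 0 else hm x0 k x * U x) \<partial>count_space UNIV)"
    using U0 by (intro nn_integral_cong) auto
  also have "\<dots> \<le> (\<integral>\<^sup>+x. (if x = (\<lambda>_. 0) then 0 else hm x0 k x * PF U x) \<partial>count_space UNIV)"
    using Us by (intro nn_integral_mono) (auto intro: mult_left_mono)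
  also have "\<dots> = (\<integral>\<^sup>+y. hm x0 (Suc k) y * U y \<partial>count_space UNIV)"
    unfolding hm_Suc by (rule duality[symmetric])
  finally show ?thesis .
qed

lemma infinite_time:
  assumes x0: "x0 \<noteq> (\<lambda>_. 0)" and U0: "U (\<lambda>_. 0) = 0"
    and Us: "\<And>x. x \<noteq> (\<lambda>_. 0) \<Longrightarrow> U x \<le> PF U x"
    and U1: "\<And>y. U y \<le> 1" and pos: "0 < hm x0 K z * U z"
    and Q: "0 < Q" and qQ: "\<And>y. qq y \<le> Q * real (tot y)"
  shows "exp_hit_time \<beta> \<beta>i G \<eta> \<delta> x0 = \<infinity>"
proof -
  define I where "I k = (\<integral>\<^sup>+ y. (if y = (\<lambda>_. 0) then 0 else hm x0 k y / ennreal (qq y)) \<partial>count_space UNIV)" for k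
  define c where "c k = (\<integral>\<^sup>+y. hm x0 k y * U y \<partial>count_space UNIV)" for k
  have cmono: "K \<le> k \<Longrightarrow> c K \<le> c k" for k
    by (rule lift_Suc_mono_le[of c]) (auto simp: c_def intro: incr[OF U0 Us])
  have cK: "hm x0 K z * U z \<le> c K"
  proof -
    have "hm x0 K z * U z = (\<integral>\<^sup>+y. (hm x0 K z * U z) * indicator {z} y \<partial>count_space UNIV)"
      by (simp add: nn_integral_cmult_indicator)
    also have "\<dots> \<le> c K" unfolding c_def by (intro nn_integral_mono) (auto simp: indicator_def)
    finally show ?thesis .
  qed
  define e where "e = min (hm x0 K z * U z) 1"
  have e0: "0 < e" using pos by (simp add: e_def)
  have e1: "e \<le> 1" by (simp add: e_def)
  have ec: "e \<le> c K" using cK by (simp add: e_def min.coboundedI1)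
  define e' where "e' = enn2real e"
  have ee: "e = ennreal e'" unfolding e'_def using e1
    by (metis ennreal_enn2real ennreal_one_less_top infinity_ennreal_def order_le_less_trans top.not_eq_extremum)
  have e'0: "0 < e'" using e0 ee by (metis ennreal_eq_0_iff not_le order_less_irrefl)
  define n0 where "n0 = tot x0"
  have n0: "1 \<le> n0" using x0 tot_zero_iff[of x0] unfolding n0_def by linarith
  define gr where "gr k = (if K \<le> k then e' / (Q * (real n0 + real k)) else 0)" for k
  have gr0: "0 \<le> gr k" for k using e'0 Q by (simp add: gr_def)
  have Ik: "ennreal (gr k) \<le> I k" for k
  proof (cases "K \<le> k")
    case False then show ?thesis by (simp add: gr_def)
  next
    case True
    define D where "D = Q * (real n0 + real k)"
    have D0: "0 < D" using Q n0 by (simp add: D_def)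
    have "ennreal (gr k) = e * ennreal (1 / D)" using True ee e'0 D0
      by (simp add: gr_def D_def ennreal_mult[symmetric])
    also have "\<dots> \<le> c k * ennreal (1 / D)" using ec cmono[OF True] by (intro mult_right_mono) auto
    also have "\<dots> = (\<integral>\<^sup>+y. hm x0 k y * U y * ennreal (1 / D) \<partial>count_space UNIV)"
      unfolding c_def by (rule nn_integral_multc[symmetric]) simp
    also have "\<dots> \<le> I k" unfolding I_def
    proof (intro nn_integral_mono)
      fix y :: "'l \<Rightarrow> nat"
      show "hm x0 k y * U y * ennreal (1 / D) \<le> (if y = (\<lambda>_. 0) then 0 else hm x0 k y / ennreal (qq y))"
      proof (cases "y = (\<lambda>_. 0) \<or> hm x0 k y = 0")
        case True then show ?thesis using U0 by auto
      next
        case False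
        then have y: "y \<noteq> (\<lambda>_. 0)" and h: "hm x0 k y \<noteq> 0" by auto
        have qy: "0 < qq y" by (rule qq_pos[OF y])
        have "tot y \<le> n0 + k" using support[OF h] unfolding n0_def .
        then have "qq y \<le> D" using qQ[of y] Q unfolding D_def
          by (smt (verit, ccfv_SIG) mult_left_mono of_nat_add of_nat_mono)
        then have "1 / D \<le> 1 / qq y" using qy by (simp add: frac_le)
        then have f1: "ennreal (1 / D) \<le> ennreal (1 / qq y)" by (rule ennreal_leI)
        have f2: "hm x0 k y * U y \<le> hm x0 k y * 1" using U1 by (intro mult_left_mono) auto
        have "hm x0 k y * U y * ennreal (1 / D) \<le> hm x0 k y * 1 * ennreal (1 / qq y)"
          by (rule mult_mono[OF f2 f1 zero_le zero_le])
        also have "\<dots> = hm x0 k y / ennreal (qq y)"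
          using qy by (simp add: divide_ennreal_def inverse_ennreal divide_inverse)
        finally show ?thesis using y by simp
      qed
    qed
    finally show ?thesis .
  qed
  have notsum: "\<not> summable gr"
  proof
    assume sg: "summable gr"
    have "summable (\<lambda>n. 2 * Q / e' * gr n)" using sg by (rule summable_mult)
    moreover have "norm (inverse (real n)) \<le> 2 * Q / e' * gr n" if "n \<ge> K + n0" for n
    proof -
      have n: "K \<le> n" "n0 \<le> n" "1 \<le> n" using that n0 by auto
      have X: "real n0 + real n > 0" using n by simp
      have "2 * Q / e' * gr n = 2 * Q / e' * (e' / (Q * (real n0 + real n)))" using n by (simp add: gr_def)
      also have "\<dots> = 2 / (real n0 + real n)"
      proof -
        have g: "\<And>X::real. X > 0 \<Longrightarrow> 2 * Q / e' * (e' / (Q * X)) = 2 / X" using e'0 Q by (simp add: field_simps)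
        show ?thesis by (rule g[OF X])
      qed
      finally have "2 * Q / e' * gr n = 2 / (real n0 + real n)" .
      moreover have "inverse (real n) \<le> 2 / (real n0 + real n)" using n by (simp add: field_simps)
      ultimately show ?thesis by simp
    qed
    ultimately have "summable (\<lambda>n. inverse (real n))" by (rule summable_comparison_test') auto
    then show False using not_summable_harmonic by blast
  qed
  have "(\<Sum>k. ennreal (gr k)) = Orderings.top"
  proof (rule ccontr)
    assume "(\<Sum>k. ennreal (gr k)) \<noteq> Orderings.top"
    then have "summable gr" by (rule summable_suminf_not_top[OF gr0])
    then show False using notsum by blast
  qed
  moreover have "(\<Sum>k. ennreal (gr k)) \<le> (\<Sum>k. I k)" by (rule suminf_le[OF Ik summableI summableI])
  moreover have "exp_hit_time \<beta> \<beta>i G \<eta> \<delta> x0 = (\<Sum>k. I k)"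
    unfolding exp_hit_time_def I_def ..
  ultimately show ?thesis by (metis infinity_ennreal_def top_unique)
qed

definition Wf :: "('l \<Rightarrow> real) \<Rightarrow> ('l \<Rightarrow> nat) \<Rightarrow> real" where
  "Wf w x = (\<Sum>u\<in>UNIV. w u * real (x u))"

lemma Wf_upd: "Wf w (x(u := a)) = Wf w x + w u * (real a - real (x u))"
proof -
  have "Wf w x = w u * real (x u) + (\<Sum>v\<in>UNIV - {u}. w v * real (x v))" unfolding Wf_def by (rule sum.remove) auto
  moreover have "Wf w (x(u := a)) = w u * real a + (\<Sum>v\<in>UNIV - {u}. w v * real ((x(u := a)) v))"
    unfolding Wf_def by (subst sum.remove[of _ u]) auto
  moreover have "(\<Sum>v\<in>UNIV - {u}. w v * real ((x(u := a)) v)) = (\<Sum>v\<in>UNIV - {u}. w v * real (x v))"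
    by (rule sum.cong) auto
  ultimately show ?thesis by (simp add: algebra_simps)
qed

lemma Wf_up: "Wf w (x(u := x u + 1)) = Wf w x + w u"
  by (simp add: Wf_upd)

lemma Wf_dn: "0 < x u \<Longrightarrow> Wf w (x(u := x u - 1)) = Wf w x - w u"
  by (simp add: Wf_upd of_nat_diff)

lemma Wf_nonneg: "(\<And>u. 0 \<le> w u) \<Longrightarrow> 0 \<le> Wf w x"
  unfolding Wf_def by (intro sum_nonneg) auto

lemma Wf_ge_term: "(\<And>u. 0 \<le> w u) \<Longrightarrow> w u * real (x u) \<le> Wf w x"
  unfolding Wf_def by (rule member_le_sum) auto

lemma tot_real: "real (tot x) = (\<Sum>u\<in>UNIV. real (x u))"
  unfolding tot_def by simp

lemma sum_bw: "(\<Sum>u\<in>UNIV. bb x u * w u) =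
   \<beta> (tot x) * (\<Sum>v\<in>UNIV. (\<Sum>u\<in>UNIV. w u * G u v) * real (x v)) + \<beta>i (tot x) * \<eta> * Wf w x"
proof -
  have "(\<Sum>u\<in>UNIV. bb x u * w u) = (\<Sum>u\<in>UNIV. \<beta> (tot x) * (\<Sum>v\<in>UNIV. w u * G u v * real (x v))
      + \<beta>i (tot x) * \<eta> * (w u * real (x u)))"
    unfolding birth_rate_def by (intro sum.cong refl) (simp add: algebra_simps sum_distrib_left sum_distrib_right)
  also have "\<dots> = \<beta> (tot x) * (\<Sum>u\<in>UNIV. \<Sum>v\<in>UNIV. w u * G u v * real (x v)) + \<beta>i (tot x) * \<eta> * Wf w x"
    unfolding Wf_def by (simp add: sum.distrib sum_distrib_left)
  also have "(\<Sum>u\<in>UNIV. \<Sum>v\<in>UNIV. w u * G u v * real (x v)) = (\<Sum>v\<in>UNIV. (\<Sum>u\<in>UNIV. w u * G u v) * real (x v))"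
    by (subst sum.swap) (simp add: sum_distrib_right)
  finally show ?thesis .
qed

lemma sum_dw: "(\<Sum>u\<in>UNIV. dd x u * w u) = \<delta> * Wf w x"
  unfolding death_rate_def Wf_def by (simp add: sum_distrib_left algebra_simps)

lemma sum_dd: "(\<Sum>u\<in>UNIV. dd x u) = \<delta> * real (tot x)"
  unfolding death_rate_def tot_real by (simp add: sum_distrib_left)

lemma qq_bound:
  assumes Bb: "\<And>n. \<beta> n \<le> Bb" and Bi: "\<And>n. \<beta>i n \<le> Bi"
  shows "qq y \<le> (Bb * (\<Sum>u\<in>UNIV. \<Sum>v\<in>UNIV. G u v) + Bi * \<eta> + \<delta>) * real (tot y)"
proof -
  define n where "n = real (tot y)"
  have yv: "real (y v) \<le> n" for v
    unfolding n_def tot_real by (rule member_le_sum) auto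
  have Bb0: "0 \<le> Bb" using Bb[of 0] beta_pos by (meson less_imp_le order_trans)
  have Bi0: "0 \<le> Bi" using Bi[of 0] betai_pos by (meson less_imp_le order_trans)
  have "(\<Sum>u\<in>UNIV. \<Sum>v\<in>UNIV. G u v * real (y v)) \<le> (\<Sum>u\<in>UNIV. \<Sum>v\<in>UNIV. G u v * n)"
    using G_nonneg yv by (intro sum_mono mult_left_mono) auto
  also have "\<dots> = (\<Sum>u\<in>UNIV. \<Sum>v\<in>UNIV. G u v) * n" by (simp add: sum_distrib_right)
  finally have s1: "(\<Sum>u\<in>UNIV. \<Sum>v\<in>UNIV. G u v * real (y v)) \<le> (\<Sum>u\<in>UNIV. \<Sum>v\<in>UNIV. G u v) * n" .
  have s0: "0 \<le> (\<Sum>u\<in>UNIV. \<Sum>v\<in>UNIV. G u v * real (y v))"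
    using G_nonneg by (intro sum_nonneg mult_nonneg_nonneg) auto
  have "(\<Sum>u\<in>UNIV. bb y u) = \<beta> (tot y) * (\<Sum>u\<in>UNIV. \<Sum>v\<in>UNIV. G u v * real (y v)) + \<beta>i (tot y) * \<eta> * n"
    unfolding birth_rate_def n_def tot_real by (simp add: sum.distrib sum_distrib_left)
  also have "\<dots> \<le> Bb * ((\<Sum>u\<in>UNIV. \<Sum>v\<in>UNIV. G u v) * n) + Bi * \<eta> * n"
  proof (intro add_mono mult_mono mult_right_mono)
    show "\<beta> (tot y) \<le> Bb" by (rule Bb)
    show "\<beta>i (tot y) \<le> Bi" by (rule Bi)
  qed (use s1 s0 Bb0 Bi0 eta_pos in \<open>auto simp: n_def\<close>)
  finally have "(\<Sum>u\<in>UNIV. bb y u) \<le> Bb * ((\<Sum>u\<in>UNIV. \<Sum>v\<in>UNIV. G u v) * n) + Bi * \<eta> * n" .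
  then show ?thesis unfolding qq_eq sum_dd n_def[symmetric] by (simp add: algebra_simps)
qed

lemma exp_fact1: "0 \<le> t \<Longrightarrow> t * exp (- t) \<le> 1 - exp (- (t::real))"
proof -
  assume "0 \<le> t"
  have "(1 + t) * exp (- t) \<le> exp t * exp (- t)" by (rule mult_right_mono[OF exp_ge_add_one_self]) simp
  then show ?thesis by (simp add: exp_minus algebra_simps)
qed

lemma exp_fact2: "exp t - 1 \<le> t * exp (t::real)"
proof -
  have "(1 - t) * exp t \<le> exp (- t) * exp t" using exp_ge_add_one_self[of "-t"] by (intro mult_right_mono) auto
  then show ?thesis by (simp add: exp_minus algebra_simps)
qed

lemma part2:
  fixes w :: "'l \<Rightarrow> real" and r \<epsilon> Bb Bi :: real and N :: nat and x0 :: "'l \<Rightarrow> nat"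
  assumes wpos: "\<And>u. 0 < w u" and w1: "\<And>u. w u \<le> 1" and wG: "\<And>v. r * w v \<le> (\<Sum>u\<in>UNIV. w u * G u v)"
    and r: "0 \<le> r" and eps: "0 < \<epsilon>" and N: "\<And>n. N \<le> n \<Longrightarrow> \<delta> + \<epsilon> \<le> \<beta> n * r + \<beta>i n * \<eta>"
    and Bb: "\<And>n. \<beta> n \<le> Bb" and Bi: "\<And>n. \<beta>i n \<le> Bi" and x0: "x0 \<noteq> (\<lambda>_. 0)"
  shows "exp_hit_time \<beta> \<beta>i G \<eta> \<delta> x0 = \<infinity>"
proof -
  define W where "W = Wf w"
  have w0: "\<And>u. 0 \<le> w u" using wpos less_imp_le by blast
  have W0: "0 \<le> W x" for x unfolding W_def by (rule Wf_nonneg[OF w0])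
  define \<kappa> where "\<kappa> = ln ((\<delta> + \<epsilon>) / \<delta>) / 2"
  have kap: "0 < \<kappa>" using eps delta_pos by (simp add: \<kappa>_def)
  have e2k: "exp \<kappa> * \<delta> = exp (- \<kappa>) * (\<delta> + \<epsilon>)"
  proof -
    have "exp (2 * \<kappa>) = (\<delta> + \<epsilon>) / \<delta>" using eps delta_pos by (simp add: \<kappa>_def)
    moreover have "exp \<kappa> = exp (2 * \<kappa>) * exp (- \<kappa>)" by (simp add: exp_add[symmetric])
    ultimately show ?thesis using delta_pos by simp
  qed
  define M where "M = real N"
  define a where "a = exp (- \<kappa> * M)"
  have a1: "a \<le> 1" using kap by (simp add: a_def M_def)
  define U where "U x = max 0 (a - exp (- \<kappa> * W x))" for x
  have Unn: "0 \<le> U x" for x by (simp add: U_def)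
  have U1: "U x \<le> 1" for x using a1 by (simp add: U_def) (smt (verit) exp_gt_zero)
  have W00: "W (\<lambda>_. 0) = 0" by (simp add: W_def Wf_def)
  have U0: "U (\<lambda>_. 0) = 0" using a1 W00 by (simp add: U_def)
  have WT: "W x \<le> real (tot x)" for x
    unfolding W_def Wf_def tot_real using w1 w0 by (intro sum_mono mult_left_le_one_le) auto
  have bwN: "(\<delta> + \<epsilon>) * W x \<le> (\<Sum>u\<in>UNIV. bb x u * w u)" if "N \<le> tot x" for x
  proof -
    have S: "r * W x \<le> (\<Sum>v\<in>UNIV. (\<Sum>u\<in>UNIV. w u * G u v) * real (x v))"
      unfolding W_def Wf_def sum_distrib_left using wG
      by (intro sum_mono) (simp add: mult.assoc[symmetric] mult_right_mono)
    have "(\<delta> + \<epsilon>) * W x \<le> (\<beta> (tot x) * r + \<beta>i (tot x) * \<eta>) * W x"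
      using N[OF that] W0 by (intro mult_right_mono) auto
    also have "\<dots> = \<beta> (tot x) * (r * W x) + \<beta>i (tot x) * \<eta> * W x" by (simp add: algebra_simps)
    also have "\<dots> \<le> \<beta> (tot x) * (\<Sum>v\<in>UNIV. (\<Sum>u\<in>UNIV. w u * G u v) * real (x v)) + \<beta>i (tot x) * \<eta> * W x"
      using S beta_pos by (intro add_right_mono mult_left_mono) (auto simp: less_imp_le)
    also have "\<dots> = (\<Sum>u\<in>UNIV. bb x u * w u)" unfolding W_def by (rule sum_bw[symmetric])
    finally show ?thesis .
  qed
  have Us: "qq x * U x \<le> (\<Sum>u\<in>UNIV. bb x u * U (x(u := x u + 1)) + dd x u * U (x(u := x u - 1)))"
    if x: "x \<noteq> (\<lambda>_. 0)" for x
  proof (cases "U x = 0")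
    case True
    have "0 \<le> (\<Sum>u\<in>UNIV. bb x u * U (x(u := x u + 1)) + dd x u * U (x(u := x u - 1)))"
      using bb_nonneg dd_nonneg Unn by (intro sum_nonneg add_nonneg_nonneg mult_nonneg_nonneg) auto
    then show ?thesis using True by simp
  next
    case False
    define E where "E = exp (- \<kappa> * W x)"
    have E0: "0 < E" by (simp add: E_def)
    have Ux: "U x = a - E" and aE: "E < a" using False by (auto simp: U_def E_def max_def split: if_splits)
    have "W x > M"
    proof -
      have "- \<kappa> * W x < - \<kappa> * M" using aE unfolding E_def a_def by simp
      then show ?thesis using kap by simp
    qed
    then have NT: "N \<le> tot x" using WT[of x] unfolding M_def by linarith
    have up: "bb x u * (a - E * exp (- \<kappa> * w u)) \<le> bb x u * U (x(u := x u + 1))" for u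
    proof -
      have "exp (- \<kappa> * W (x(u := x u + 1))) = E * exp (- \<kappa> * w u)"
        unfolding W_def Wf_up E_def W_def by (simp add: algebra_simps exp_add[symmetric])
      then have "a - E * exp (- \<kappa> * w u) \<le> U (x(u := x u + 1))" unfolding U_def by simp
      then show ?thesis using bb_nonneg by (intro mult_left_mono) auto
    qed
    have dn: "dd x u * (a - E * exp (\<kappa> * w u)) \<le> dd x u * U (x(u := x u - 1))" for u
    proof (cases "x u = 0")
      case True then show ?thesis by (simp add: death_rate_def)
    next
      case False
      have Wd: "W (x(u := x u - 1)) = W x - w u" unfolding W_def using False by (intro Wf_dn) simp
      have "exp (- \<kappa> * W (x(u := x u - 1))) = E * exp (\<kappa> * w u)"
        unfolding Wd E_def by (simp add: algebra_simps exp_add[symmetric])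
      then have "a - E * exp (\<kappa> * w u) \<le> U (x(u := x u - 1))" unfolding U_def by simp
      then show ?thesis using dd_nonneg by (intro mult_left_mono) auto
    qed
    have key: "(\<Sum>u\<in>UNIV. bb x u * exp (- \<kappa> * w u) + dd x u * exp (\<kappa> * w u)) \<le> qq x"
    proof -
      have b1: "bb x u * (\<kappa> * w u * exp (- \<kappa>)) \<le> bb x u * (1 - exp (- \<kappa> * w u))" for u
      proof -
        have t0: "0 \<le> \<kappa> * w u" using kap w0 by simp
        have "\<kappa> * w u * exp (- \<kappa>) \<le> \<kappa> * w u * exp (- (\<kappa> * w u))"
          using kap w1[of u] t0 by (intro mult_left_mono) (auto simp: mult_left_le_one_le)
        also have "\<dots> \<le> 1 - exp (- (\<kappa> * w u))" by (rule exp_fact1[OF t0])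
        finally show ?thesis using bb_nonneg by (intro mult_left_mono) auto
      qed
      have d1: "dd x u * (exp (\<kappa> * w u) - 1) \<le> dd x u * (\<kappa> * w u * exp \<kappa>)" for u
      proof -
        have t0: "0 \<le> \<kappa> * w u" using kap w0 by simp
        have "exp (\<kappa> * w u) - 1 \<le> \<kappa> * w u * exp (\<kappa> * w u)" by (rule exp_fact2)
        also have "\<dots> \<le> \<kappa> * w u * exp \<kappa>"
          using kap w1[of u] t0 by (intro mult_left_mono) (auto simp: mult_left_le_one_le)
        finally show ?thesis using dd_nonneg by (intro mult_left_mono) auto
      qed
      have "(\<Sum>u\<in>UNIV. dd x u * (exp (\<kappa> * w u) - 1)) \<le> (\<Sum>u\<in>UNIV. dd x u * (\<kappa> * w u * exp \<kappa>))"
        using d1 by (rule sum_mono)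
      also have "\<dots> = \<kappa> * exp \<kappa> * (\<Sum>u\<in>UNIV. dd x u * w u)"
        by (simp add: sum_distrib_left algebra_simps)
      also have "\<dots> = \<kappa> * (exp \<kappa> * \<delta>) * W x" unfolding sum_dw W_def by (simp add: algebra_simps)
      also have "\<dots> = \<kappa> * exp (- \<kappa>) * ((\<delta> + \<epsilon>) * W x)" unfolding e2k by (simp add: algebra_simps)
      also have "\<dots> \<le> \<kappa> * exp (- \<kappa>) * (\<Sum>u\<in>UNIV. bb x u * w u)"
        using bwN[OF NT] kap by (intro mult_left_mono) auto
      also have "\<dots> = (\<Sum>u\<in>UNIV. bb x u * (\<kappa> * w u * exp (- \<kappa>)))"
        by (simp add: sum_distrib_left algebra_simps)
      also have "\<dots> \<le> (\<Sum>u\<in>UNIV. bb x u * (1 - exp (- \<kappa> * w u)))"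
        using b1 by (rule sum_mono)
      finally have "(\<Sum>u\<in>UNIV. dd x u * (exp (\<kappa> * w u) - 1)) \<le> (\<Sum>u\<in>UNIV. bb x u * (1 - exp (- \<kappa> * w u)))" .
      then show ?thesis unfolding qq_eq
        by (simp add: algebra_simps sum.distrib sum_subtractf)
    qed
    have "qq x * U x = a * qq x - E * qq x" unfolding Ux by (simp add: algebra_simps)
    also have "\<dots> \<le> a * qq x - E * (\<Sum>u\<in>UNIV. bb x u * exp (- \<kappa> * w u) + dd x u * exp (\<kappa> * w u))"
      using key E0 by (simp add: mult_left_mono)
    also have "\<dots> = (\<Sum>u\<in>UNIV. bb x u * (a - E * exp (- \<kappa> * w u)) + dd x u * (a - E * exp (\<kappa> * w u)))"
      unfolding qq_eq by (simp add: algebra_simps sum.distrib sum_distrib_left sum_subtractf)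
    also have "\<dots> \<le> (\<Sum>u\<in>UNIV. bb x u * U (x(u := x u + 1)) + dd x u * U (x(u := x u - 1)))"
      using up dn by (intro sum_mono add_mono)
    finally show ?thesis .
  qed
  obtain u where u: "0 < x0 u" using x0 by (auto simp: fun_eq_iff)
  define j where "j = nat \<lceil>M / w u\<rceil> + 1"
  have "M / w u < real j" unfolding j_def by linarith
  then have jM: "M < real j * w u" using wpos[of u] by (simp add: pos_divide_less_eq)
  define z where "z = x0(u := x0 u + j)"
  have "W z = W x0 + w u * real j" unfolding z_def W_def by (simp add: Wf_upd)
  then have "M < W z" using jM W0[of x0] by (simp add: mult.commute)
  then have "exp (- \<kappa> * W z) < a" unfolding a_def using kap by simp
  then have Uz: "0 < U z" by (simp add: U_def)
  have hz: "0 < hm x0 j z" unfolding z_def by (rule pump[of x0 u, OF u])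
  have pos: "0 < hm x0 j z * ennreal (U z)"
    using hz Uz by (metis ennreal_eq_0_iff mult_eq_0_iff not_le zero_less_iff_neq_zero)
  define Q where "Q = Bb * (\<Sum>u\<in>UNIV. \<Sum>v\<in>UNIV. G u v) + Bi * \<eta> + \<delta>"
  have Bb0: "0 \<le> Bb" using Bb[of 0] beta_pos by (meson less_imp_le order_trans)
  have Bi0: "0 \<le> Bi" using Bi[of 0] betai_pos by (meson less_imp_le order_trans)
  have "0 \<le> Bb * (\<Sum>u\<in>UNIV. \<Sum>v\<in>UNIV. G u v) + Bi * \<eta>"
    using Bb0 Bi0 G_nonneg eta_pos by (intro add_nonneg_nonneg mult_nonneg_nonneg sum_nonneg) auto
  then have Q0: "0 < Q" using delta_pos by (simp add: Q_def)
  show ?thesis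
  proof (rule infinite_time[OF x0, where U = "\<lambda>y. ennreal (U y)"])
    show "ennreal (U (\<lambda>_. 0)) = 0" using U0 by simp
    show "ennreal (U x) \<le> PF (\<lambda>y. ennreal (U y)) x" if "x \<noteq> (\<lambda>_. 0)" for x
      by (rule U_cond[OF Unn that Us[OF that]])
    show "ennreal (U y) \<le> 1" for y using U1[of y] by (simp add: ennreal_leI)
    show "0 < hm x0 j z * ennreal (U z)" by (rule pos)
    show "0 < Q" by (rule Q0)
    show "qq y \<le> Q * real (tot y)" for y unfolding Q_def by (rule qq_bound[OF Bb Bi])
  qed
qed

lemma ln_diff_bound: "0 < a \<Longrightarrow> 0 < b \<Longrightarrow> ln a - ln b \<le> (a - b) / (b::real)"
proof -
  assume a: "0 < a" and b: "0 < b"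
  have "ln (a / b) \<le> a / b - 1" using a b by (intro ln_le_minus_one) simp
  moreover have "ln (a / b) = ln a - ln b" using a b by (simp add: ln_div)
  moreover have "a / b - 1 = (a - b) / b" using b by (simp add: field_simps)
  ultimately show ?thesis by simp
qed

lemma part1:
  fixes w :: "'l \<Rightarrow> real" and r \<epsilon> Bb Bi :: real and N :: nat
  assumes wpos: "\<And>u. 0 < w u" and wG: "\<And>v. (\<Sum>u\<in>UNIV. w u * G u v) \<le> r * w v" and r: "0 < r"
    and eps: "0 < \<epsilon>" and N: "\<And>n. N \<le> n \<Longrightarrow> \<beta> n * r + \<beta>i n * \<eta> \<le> \<delta> - \<epsilon>"
    and Bb: "\<And>n. \<beta> n \<le> Bb" and Bi: "\<And>n. \<beta>i n \<le> Bi"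
  shows "\<exists>C>0. \<forall>x. 2 \<le> tot x \<longrightarrow> exp_hit_time \<beta> \<beta>i G \<eta> \<delta> x \<le> ennreal (C * ln (real (tot x)))"
proof -
  define W where "W = Wf w"
  have w0: "\<And>u. 0 \<le> w u" using wpos less_imp_le by blast
  have W0: "0 \<le> W x" for x unfolding W_def by (rule Wf_nonneg[OF w0])
  have Wterm: "w u * real (x u) \<le> W x" for x u unfolding W_def by (rule Wf_ge_term[OF w0])
  define wmin where "wmin = Min (range w)"
  define wmax where "wmax = Max (range w)"
  have wmin_le: "wmin \<le> w u" for u unfolding wmin_def by (rule Min_le) auto
  have wmax_ge: "w u \<le> wmax" for u unfolding wmax_def by (rule Max_ge) auto
  have wmin0: "0 < wmin" unfolding wmin_def using wpos by (subst Min_gr_iff) auto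
  have wmax0: "0 < wmax" using wmin0 wmin_le[of undefined] wmax_ge[of undefined] by linarith
  have Wlow: "wmin \<le> W x" if xnz: "x \<noteq> (\<lambda>_. 0)" for x
  proof -
    obtain u where "x u \<noteq> 0" using xnz by (auto simp: fun_eq_iff)
    then have "1 \<le> real (x u)" by simp
    then have "w u \<le> w u * real (x u)" using w0[of u] by (simp add: mult_le_cancel_left1)
    then show ?thesis using wmin_le[of u] Wterm[of u x] by linarith
  qed
  have Wup: "W x \<le> wmax * real (tot x)" for x
    unfolding W_def Wf_def tot_real sum_distrib_left using wmax_ge by (intro sum_mono mult_right_mono) auto
  define R where "R = Bb * r + Bi * \<eta>"
  have Bb0: "0 \<le> Bb" using Bb[of 0] beta_pos by (meson less_imp_le order_trans)
  have Bi0: "0 \<le> Bi" using Bi[of 0] betai_pos by (meson less_imp_le order_trans)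
  have R0: "0 \<le> R" unfolding R_def using Bb0 Bi0 r eta_pos by simp
  have Sle: "(\<Sum>v\<in>UNIV. (\<Sum>u\<in>UNIV. w u * G u v) * real (x v)) \<le> r * W x" for x
    unfolding W_def Wf_def sum_distrib_left using wG
    by (intro sum_mono) (simp add: mult.assoc[symmetric] mult_right_mono)
  have bwR: "(\<Sum>u\<in>UNIV. bb x u * w u) \<le> R * W x" for x
  proof -
    have "(\<Sum>u\<in>UNIV. bb x u * w u) \<le> \<beta> (tot x) * (r * W x) + \<beta>i (tot x) * \<eta> * W x"
      unfolding W_def sum_bw using Sle[of x] beta_pos unfolding W_def
      by (intro add_right_mono mult_left_mono) (auto simp: less_imp_le)
    also have "\<dots> \<le> Bb * (r * W x) + Bi * \<eta> * W x"
      using Bb Bi W0[of x] r eta_pos by (intro add_mono mult_right_mono) auto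
    finally show ?thesis by (simp add: R_def algebra_simps)
  qed
  have bwN: "(\<Sum>u\<in>UNIV. bb x u * w u) \<le> (\<delta> - \<epsilon>) * W x" if "N \<le> tot x" for x
  proof -
    have "(\<Sum>u\<in>UNIV. bb x u * w u) \<le> \<beta> (tot x) * (r * W x) + \<beta>i (tot x) * \<eta> * W x"
      unfolding W_def sum_bw using Sle[of x] beta_pos unfolding W_def
      by (intro add_right_mono mult_left_mono) (auto simp: less_imp_le)
    also have "\<dots> = (\<beta> (tot x) * r + \<beta>i (tot x) * \<eta>) * W x" by (simp add: algebra_simps)
    also have "\<dots> \<le> (\<delta> - \<epsilon>) * W x" using N[OF that] W0[of x] by (intro mult_right_mono) auto
    finally show ?thesis .
  qed
  define c1 where "c1 = 2 / \<epsilon>"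
  have c10: "0 < c1" using eps by (simp add: c1_def)
  define \<kappa> where "\<kappa> = 2 * (R + 1) / (\<delta> * wmin)"
  have kap: "0 < \<kappa>" using R0 delta_pos wmin0 by (simp add: \<kappa>_def)
  define \<theta> where "\<theta> = 1 + \<kappa> * wmin / 2"
  have thd: "\<theta> * \<delta> = \<delta> + R + 1" using delta_pos wmin0 by (simp add: \<theta>_def \<kappa>_def field_simps)
  define WS where "WS = max (wmax * real N) 1"
  define A where "A = (c1 * R + 1) / (\<kappa> * exp (- \<kappa> * WS) * wmin)"
  have A0: "0 < A"
  proof -
    have "0 < c1 * R + 1" using c10 R0 by (simp add: add_nonneg_pos)
    moreover have "0 < \<kappa> * exp (- \<kappa> * WS) * wmin" using kap wmin0 by simp
    ultimately show ?thesis unfolding A_def by (rule divide_pos_pos)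
  qed
  have AWS: "A * \<kappa> * exp (- \<kappa> * WS) * wmin = c1 * R + 1" using kap wmin0 by (simp add: A_def)
  define V where "V x = c1 * ln (W x + 1) + A * (1 - exp (- \<kappa> * W x))" for x
  have Vnn: "0 \<le> V x" for x
  proof -
    have "0 \<le> ln (W x + 1)" using W0[of x] by simp
    moreover have "exp (- \<kappa> * W x) \<le> 1" using kap W0[of x] by simp
    ultimately show ?thesis unfolding V_def using c10 A0 by (intro add_nonneg_nonneg mult_nonneg_nonneg) auto
  qed
  have key: "(\<Sum>u\<in>UNIV. bb x u * V (x(u := x u + 1)) + dd x u * V (x(u := x u - 1))) + 1 \<le> qq x * V x"
    if x: "x \<noteq> (\<lambda>_. 0)" for x
  proof -
    define E where "E = exp (- \<kappa> * W x)"
    define P where "P = c1 / (W x + 1)"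
    have E0: "0 < E" by (simp add: E_def)
    have P0: "0 < P" using c10 W0[of x] by (simp add: P_def)
    define B where "B = (\<Sum>u\<in>UNIV. bb x u * w u)"
    have up: "bb x u * (V (x(u := x u + 1)) - V x) \<le> bb x u * (w u * (P + A * \<kappa> * E))" for u
    proof -
      have Wu: "W (x(u := x u + 1)) = W x + w u" unfolding W_def by (rule Wf_up)
      have l: "ln (W x + w u + 1) - ln (W x + 1) \<le> w u / (W x + 1)"
        using ln_diff_bound[of "W x + w u + 1" "W x + 1"] W0[of x] w0[of u] by simp
      have e: "1 - exp (- (\<kappa> * w u)) \<le> \<kappa> * w u" using exp_ge_add_one_self[of "- (\<kappa> * w u)"] by simp
      have "V (x(u := x u + 1)) - V x = c1 * (ln (W x + w u + 1) - ln (W x + 1)) + A * E * (1 - exp (- (\<kappa> * w u)))"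
        unfolding V_def Wu E_def by (simp add: algebra_simps exp_add[symmetric])
      also have "\<dots> \<le> c1 * (w u / (W x + 1)) + A * E * (\<kappa> * w u)"
        using l e c10 A0 E0 by (intro add_mono mult_left_mono) auto
      also have "\<dots> = w u * (P + A * \<kappa> * E)" by (simp add: P_def algebra_simps)
      finally show ?thesis using bb_nonneg by (intro mult_left_mono) auto
    qed
    have dn: "dd x u * (V (x(u := x u - 1)) - V x) \<le> dd x u * (- (w u * (P + A * \<kappa> * E * \<theta>)))" for u
    proof (cases "x u = 0")
      case True then show ?thesis by (simp add: death_rate_def)
    next
      case False
      have Wd: "W (x(u := x u - 1)) = W x - w u" unfolding W_def using False by (intro Wf_dn) simp
      have wle: "w u \<le> W x"
      proof -
        have "1 \<le> real (x u)" using False by simp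
        then have "w u \<le> w u * real (x u)" using w0[of u] by (simp add: mult_le_cancel_left1)
        then show ?thesis using Wterm[of u x] by linarith
      qed
      have l: "ln (W x - w u + 1) - ln (W x + 1) \<le> - (w u / (W x + 1))"
        using ln_diff_bound[of "W x - w u + 1" "W x + 1"] W0[of x] w0[of u] wle by simp
      have t0: "0 \<le> \<kappa> * w u" using kap w0[of u] by simp
      have e: "\<kappa> * w u * \<theta> \<le> exp (\<kappa> * w u) - 1"
      proof -
        have kw: "\<kappa> * wmin \<le> \<kappa> * w u" using kap wmin_le[of u] by simp
        have "\<kappa> * w u * (\<kappa> * wmin) \<le> \<kappa> * w u * (\<kappa> * w u)" by (rule mult_left_mono[OF kw t0])
        then have "\<kappa> * w u * \<theta> \<le> \<kappa> * w u + (\<kappa> * w u)\<^sup>2 / 2"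
          by (simp add: \<theta>_def power2_eq_square algebra_simps)
        also have "\<dots> \<le> exp (\<kappa> * w u) - 1" using exp_lower_Taylor_quadratic[OF t0] by simp
        finally show ?thesis .
      qed
      have "V (x(u := x u - 1)) - V x = c1 * (ln (W x - w u + 1) - ln (W x + 1)) - A * E * (exp (\<kappa> * w u) - 1)"
        unfolding V_def Wd E_def by (simp add: algebra_simps exp_add[symmetric])
      also have "\<dots> \<le> c1 * (- (w u / (W x + 1))) - A * E * (\<kappa> * w u * \<theta>)"
        using l e c10 A0 E0 by (intro diff_mono mult_left_mono) auto
      also have "\<dots> = - (w u * (P + A * \<kappa> * E * \<theta>))" by (simp add: P_def algebra_simps)
      finally show ?thesis using dd_nonneg by (intro mult_left_mono) auto
    qed
    define T where "T = (\<Sum>u\<in>UNIV. bb x u * (V (x(u := x u + 1)) - V x) + dd x u * (V (x(u := x u - 1)) - V x))"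
    have "T \<le> (\<Sum>u\<in>UNIV. bb x u * (w u * (P + A * \<kappa> * E)) + dd x u * (- (w u * (P + A * \<kappa> * E * \<theta>))))"
      unfolding T_def using up dn by (intro sum_mono add_mono)
    also have "\<dots> = (P + A * \<kappa> * E) * B - (P + A * \<kappa> * E * \<theta>) * (\<Sum>u\<in>UNIV. dd x u * w u)"
    proof -
      have "(\<Sum>u\<in>UNIV. bb x u * (w u * (P + A * \<kappa> * E)) + dd x u * (- (w u * (P + A * \<kappa> * E * \<theta>))))
          = (\<Sum>u\<in>UNIV. (P + A * \<kappa> * E) * (bb x u * w u) - (P + A * \<kappa> * E * \<theta>) * (dd x u * w u))"
        by (intro sum.cong refl) (simp add: algebra_simps)
      also have "\<dots> = (P + A * \<kappa> * E) * B - (P + A * \<kappa> * E * \<theta>) * (\<Sum>u\<in>UNIV. dd x u * w u)"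
        unfolding B_def by (simp add: sum_subtractf sum_distrib_left)
      finally show ?thesis .
    qed
    also have "\<dots> = P * (B - \<delta> * W x) + A * \<kappa> * E * (B - (\<theta> * \<delta>) * W x)"
      unfolding sum_dw W_def by (simp add: algebra_simps)
    finally have T1: "T \<le> P * (B - \<delta> * W x) + A * \<kappa> * E * (B - (\<theta> * \<delta>) * W x)" .
    have AkE: "0 < A * \<kappa> * E" using A0 kap E0 by simp
    have BR: "B \<le> R * W x" unfolding B_def by (rule bwR)
    have part2: "A * \<kappa> * E * (B - (\<theta> * \<delta>) * W x) \<le> - (A * \<kappa> * E * W x)"
    proof -
      have "B - (\<theta> * \<delta>) * W x \<le> - W x" using BR W0[of x] delta_pos unfolding thd
        by (simp add: algebra_simps) (smt (verit, best) mult_nonneg_nonneg)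
      then have "A * \<kappa> * E * (B - (\<theta> * \<delta>) * W x) \<le> A * \<kappa> * E * (- W x)"
        using AkE by (intro mult_left_mono) auto
      then show ?thesis by simp
    qed
    have Tm1: "T \<le> -1"
    proof (cases "N \<le> tot x \<and> 1 \<le> W x")
      case True
      have "B - \<delta> * W x \<le> - (\<epsilon> * W x)" using bwN[of x] True unfolding B_def by (simp add: algebra_simps)
      then have "P * (B - \<delta> * W x) \<le> P * (- (\<epsilon> * W x))" using P0 by (intro mult_left_mono) auto
      also have "\<dots> = - (2 * W x / (W x + 1))"
      proof -
        have w1: "W x + 1 \<noteq> 0" using W0[of x] by simp
        have "P * (\<epsilon> * W x) = 2 * W x / (W x + 1)" unfolding P_def c1_def using eps w1
          by (simp add: divide_simps)
        then show ?thesis by simp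
      qed
      also have "\<dots> \<le> -1" using True W0[of x] by (simp add: field_simps)
      finally have "P * (B - \<delta> * W x) \<le> -1" .
      moreover have "- (A * \<kappa> * E * W x) \<le> 0" using AkE W0[of x] by simp
      ultimately show ?thesis using T1 part2 by linarith
    next
      case False
      have WWS: "W x \<le> WS"
      proof (cases "N \<le> tot x")
        case True
        then have "W x < 1" using False by simp
        then show ?thesis by (simp add: WS_def)
      next
        case False
        then have "real (tot x) \<le> real N" by simp
        then have "wmax * real (tot x) \<le> wmax * real N" using wmax0 by (intro mult_left_mono) auto
        then have "W x \<le> wmax * real N" using Wup[of x] by linarith
        then show ?thesis by (simp add: WS_def)
      qed
      have "0 \<le> \<delta> * W x" using W0[of x] delta_pos by simp
      then have "B - \<delta> * W x \<le> R * W x" using BR by linarith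
      then have "P * (B - \<delta> * W x) \<le> P * (R * W x)"
        using P0 by (intro mult_left_mono) auto
      also have "\<dots> = c1 * R * (W x / (W x + 1))" by (simp add: P_def)
      also have "\<dots> \<le> c1 * R * 1" using c10 R0 W0[of x] by (intro mult_left_mono) auto
      finally have p1: "P * (B - \<delta> * W x) \<le> c1 * R" by simp
      have "exp (- \<kappa> * WS) \<le> E" unfolding E_def using WWS kap by simp
      then have "A * \<kappa> * exp (- \<kappa> * WS) * wmin \<le> A * \<kappa> * E * W x"
        using Wlow[OF x] A0 kap wmin0 AkE
        by (intro mult_mono) (auto intro: mult_left_mono simp: less_imp_le)
      then have "- (A * \<kappa> * E * W x) \<le> - (c1 * R + 1)" using AWS by linarith
      then show ?thesis using T1 part2 p1 by linarith
    qed
    have "(\<Sum>u\<in>UNIV. bb x u * V (x(u := x u + 1)) + dd x u * V (x(u := x u - 1)))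
        = qq x * V x + T"
      unfolding T_def qq_eq by (simp add: algebra_simps sum.distrib sum_distrib_right sum_distrib_left sum_subtractf)
    then show ?thesis using Tm1 by linarith
  qed
  define K0 where "K0 = c1 * ln (wmax + 1) + A"
  have K00: "0 \<le> K0" using c10 wmax0 A0 by (simp add: K0_def)
  define C where "C = c1 + K0 / ln 2"
  have C0: "0 < C"
  proof -
    have "0 \<le> K0 / ln 2" using K00 by simp
    then show ?thesis using c10 unfolding C_def by linarith
  qed
  have "exp_hit_time \<beta> \<beta>i G \<eta> \<delta> x \<le> ennreal (C * ln (real (tot x)))" if x2: "2 \<le> tot x" for x
  proof -
    have x: "x \<noteq> (\<lambda>_. 0)" using x2 tot_zero_iff[of x] by auto
    have "exp_hit_time \<beta> \<beta>i G \<eta> \<delta> x \<le> ennreal (V x)"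
    proof (rule upper_bound[OF x])
      fix y :: "'l \<Rightarrow> nat" assume y: "y \<noteq> (\<lambda>_. 0)"
      show "PF (\<lambda>y. ennreal (V y)) y + 1 / ennreal (qq y) \<le> ennreal (V y)"
        by (rule V_cond[OF Vnn y key[OF y]])
    qed
    also have "V x \<le> C * ln (real (tot x))"
    proof -
      define n where "n = real (tot x)"
      have n2: "2 \<le> n" using x2 unfolding n_def by simp
      have ln2: "0 < ln (2::real)" by simp
      have lnn: "ln 2 \<le> ln n" using n2 by simp
      have "W x + 1 \<le> (wmax + 1) * n" using Wup[of x] n2 unfolding n_def by (simp add: algebra_simps)
      then have "ln (W x + 1) \<le> ln ((wmax + 1) * n)" using W0[of x] by simp
      also have "\<dots> = ln (wmax + 1) + ln n" using wmax0 n2 by (simp add: ln_mult)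
      finally have lW: "ln (W x + 1) \<le> ln (wmax + 1) + ln n" .
      have "V x \<le> c1 * (ln (wmax + 1) + ln n) + A"
      proof -
        have "c1 * ln (W x + 1) \<le> c1 * (ln (wmax + 1) + ln n)" using lW c10 by simp
        moreover have "A * (1 - exp (- \<kappa> * W x)) \<le> A" using A0 by simp
        ultimately show ?thesis unfolding V_def by linarith
      qed
      also have "\<dots> = c1 * ln n + K0" by (simp add: K0_def algebra_simps)
      also have "\<dots> \<le> c1 * ln n + K0 * (ln n / ln 2)"
      proof -
        have "1 \<le> ln n / ln 2" using lnn ln2 by simp
        then have "K0 * 1 \<le> K0 * (ln n / ln 2)" using K00 by (intro mult_left_mono) auto
        then show ?thesis by simp
      qed
      also have "\<dots> = C * ln n" using ln2 by (simp add: C_def algebra_simps)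
      finally show ?thesis unfolding n_def .
    qed
    then have "ennreal (V x) \<le> ennreal (C * ln (real (tot x)))" by (rule ennreal_leI)
    finally show ?thesis .
  qed
  then show ?thesis using C0 by blast
qed

end


theorem corollary1:
  fixes G :: "'l::finite \<Rightarrow> 'l \<Rightarrow> real"
    and \<eta> \<delta> \<beta>inf \<beta>iinf :: real
    and \<beta> \<beta>i :: "nat \<Rightarrow> real"
  assumes G_nonneg: "\<forall>u v. 0 \<le> G u v"
    and G_sc: "strongly_connected G"
    and eta_pos: "\<eta> > 0"
    and beta_pos: "\<forall>n. \<beta> n > 0"
    and betai_pos: "\<forall>n. \<beta>i n > 0"
    and beta_bdd: "\<exists>B. \<forall>n. \<beta> n \<le> B"
    and betai_bdd: "\<exists>B. \<forall>n. \<beta>i n \<le> B"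
    and beta_lim: "\<beta> \<longlonglongrightarrow> \<beta>inf"
    and betai_lim: "\<beta>i \<longlonglongrightarrow> \<beta>iinf"
    and delta_pos: "\<delta> > 0"
  shows "(\<beta>inf * spec_rad G + \<beta>iinf * \<eta> < \<delta> \<longrightarrow>
            (\<exists>C > 0. \<forall>x :: 'l \<Rightarrow> nat. tot x \<ge> 2 \<longrightarrow>
               exp_hit_time \<beta> \<beta>i G \<eta> \<delta> x \<le> ennreal (C * ln (real (tot x)))))
       \<and> (\<beta>inf * spec_rad G + \<beta>iinf * \<eta> > \<delta> \<longrightarrow>
            (\<forall>x :: 'l \<Rightarrow> nat. x \<noteq> (\<lambda>_. 0) \<longrightarrow> exp_hit_time \<beta> \<beta>i G \<eta> \<delta> x = \<infinity>))"
proof -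
  interpret chain \<beta> \<beta>i G \<eta> \<delta>
    using G_nonneg eta_pos beta_pos betai_pos delta_pos by unfold_locales auto
  obtain Bb where Bb: "\<And>n. \<beta> n \<le> Bb" using beta_bdd by blast
  obtain Bi where Bi: "\<And>n. \<beta>i n \<le> Bi" using betai_bdd by blast
  have binf0: "0 \<le> \<beta>inf"
    by (rule LIMSEQ_le_const[OF beta_lim]) (use beta_pos less_imp_le in blast)
  have biinf0: "0 \<le> \<beta>iinf"
    by (rule LIMSEQ_le_const[OF betai_lim]) (use betai_pos less_imp_le in blast)
  define \<rho> where "\<rho> = spec_rad G"
  have rho0: "0 \<le> \<rho>" unfolding \<rho>_def by (rule spec_rad_nonneg)
  have flim: "(\<lambda>n. \<beta> n * r + \<beta>i n * \<eta>) \<longlonglongrightarrow> \<beta>inf * r + \<beta>iinf * \<eta>" for r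
    by (intro tendsto_intros beta_lim betai_lim)
  show ?thesis
  proof (intro conjI impI)
    assume h: "\<beta>inf * spec_rad G + \<beta>iinf * \<eta> < \<delta>"
    define g where "g = \<delta> - (\<beta>inf * \<rho> + \<beta>iinf * \<eta>)"
    have g0: "0 < g" using h by (simp add: g_def \<rho>_def)
    define r where "r = \<rho> + g / (2 * (\<beta>inf + 1))"
    have rr: "\<rho> < r" using g0 binf0 by (simp add: r_def)
    have r0: "0 < r" using rr rho0 by linarith
    have "\<beta>inf * r = \<beta>inf * \<rho> + g * (\<beta>inf / (2 * (\<beta>inf + 1)))" using binf0 by (simp add: r_def algebra_simps)
    moreover have "\<beta>inf / (2 * (\<beta>inf + 1)) \<le> 1 / 2" using binf0 by (simp add: field_simps)
    moreover have "g * (\<beta>inf / (2 * (\<beta>inf + 1))) \<le> g * (1 / 2)"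
      using g0 \<open>\<beta>inf / (2 * (\<beta>inf + 1)) \<le> 1 / 2\<close> by (intro mult_left_mono) auto
    ultimately have "\<beta>inf * r \<le> \<beta>inf * \<rho> + g / 2" by simp
    moreover have "\<beta>inf * \<rho> + \<beta>iinf * \<eta> = \<delta> - g" by (simp add: g_def)
    ultimately have lim_lt: "\<beta>inf * r + \<beta>iinf * \<eta> < \<delta> - g / 4" using g0 by linarith
    obtain w where w: "\<forall>u. w u > 0" "\<forall>v. (\<Sum>u\<in>UNIV. w u * G u v) \<le> r * w v"
      using LA1[OF G_nonneg rr[unfolded \<rho>_def]] by blast
    have "eventually (\<lambda>n. \<beta> n * r + \<beta>i n * \<eta> < \<delta> - g / 4) sequentially"
      by (rule order_tendstoD(2)[OF flim lim_lt])
    then obtain N where N: "\<And>n. N \<le> n \<Longrightarrow> \<beta> n * r + \<beta>i n * \<eta> < \<delta> - g / 4"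
      unfolding eventually_sequentially by blast
    have eps: "0 < g / 4" using g0 by simp
    show "\<exists>C>0. \<forall>x. 2 \<le> tot x \<longrightarrow> exp_hit_time \<beta> \<beta>i G \<eta> \<delta> x \<le> ennreal (C * ln (real (tot x)))"
    proof (rule part1[where w = w and r = r and \<epsilon> = "g / 4" and N = N and Bb = Bb and Bi = Bi, OF _ _ r0 eps _ Bb Bi])
      show "\<And>u. 0 < w u" using w(1) by blast
      show "\<And>v. (\<Sum>u\<in>UNIV. w u * G u v) \<le> r * w v" using w(2) by blast
      show "\<And>n. N \<le> n \<Longrightarrow> \<beta> n * r + \<beta>i n * \<eta> \<le> \<delta> - g / 4" using N by (simp add: less_imp_le)
    qed
  next
    assume h: "\<beta>inf * spec_rad G + \<beta>iinf * \<eta> > \<delta>"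
    obtain r w where r0: "0 \<le> r" and wpos: "\<And>u. 0 < w u" and wG: "\<And>v. r * w v \<le> (\<Sum>u\<in>UNIV. w u * G u v)"
      and rlim: "\<delta> < \<beta>inf * r + \<beta>iinf * \<eta>"
    proof (cases "\<delta> < \<beta>iinf * \<eta>")
      case True
      show ?thesis
        by (rule that[of 0 "\<lambda>_. 1"]) (use True G_nonneg in \<open>auto intro: sum_nonneg\<close>)
    next
      case False
      define g where "g = \<beta>inf * \<rho> + \<beta>iinf * \<eta> - \<delta>"
      have g0: "0 < g" using h by (simp add: g_def \<rho>_def)
      have brho: "0 < \<beta>inf * \<rho>" using False g0 unfolding g_def by linarith
      have bpos: "0 < \<beta>inf" using brho binf0 rho0 by (metis less_eq_real_def mult_zero_left)
      have rpos: "0 < \<rho>" using brho binf0 rho0 by (metis less_eq_real_def mult_zero_right)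
      define r where "r = max (\<rho> - g / (2 * \<beta>inf)) (\<rho> / 2)"
      have rr: "r < spec_rad G" using g0 bpos rpos by (simp add: r_def \<rho>_def)
      have r0: "0 < r" using rpos by (simp add: r_def)
      have "\<beta>inf * (\<rho> - g / (2 * \<beta>inf)) \<le> \<beta>inf * r" using bpos by (intro mult_left_mono) (auto simp: r_def)
      moreover have "\<beta>inf * (\<rho> - g / (2 * \<beta>inf)) = \<beta>inf * \<rho> - g / 2" using bpos by (simp add: field_simps)
      moreover have "\<beta>inf * \<rho> + \<beta>iinf * \<eta> = \<delta> + g" by (simp add: g_def)
      ultimately have "\<delta> < \<beta>inf * r + \<beta>iinf * \<eta>" using g0 by linarith
      moreover obtain w where "\<forall>u. w u > 0" "\<forall>v. r * w v \<le> (\<Sum>u\<in>UNIV. w u * G u v)"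
        using LA2[OF G_nonneg G_sc r0 rr] by blast
      ultimately show ?thesis using that[of r w] r0 by auto
    qed
    define wm where "wm = Max (range w)"
    have wm: "w u \<le> wm" for u unfolding wm_def by (rule Max_ge) auto
    have wm0: "0 < wm" using wm[of undefined] wpos[of undefined] by linarith
    define w' where "w' u = w u / wm" for u
    have w'pos: "0 < w' u" for u using wpos wm0 by (simp add: w'_def)
    have w'1: "w' u \<le> 1" for u using wm wm0 by (simp add: w'_def)
    have w'G: "r * w' v \<le> (\<Sum>u\<in>UNIV. w' u * G u v)" for v
    proof -
      have "r * w' v = (r * w v) / wm" by (simp add: w'_def)
      also have "\<dots> \<le> (\<Sum>u\<in>UNIV. w u * G u v) / wm" using wG[of v] wm0 by (simp add: divide_right_mono)
      also have "\<dots> = (\<Sum>u\<in>UNIV. w' u * G u v)" by (simp add: w'_def sum_divide_distrib)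
      finally show ?thesis .
    qed
    define \<epsilon> where "\<epsilon> = (\<beta>inf * r + \<beta>iinf * \<eta> - \<delta>) / 2"
    have e2: "2 * \<epsilon> = \<beta>inf * r + \<beta>iinf * \<eta> - \<delta>" by (simp add: \<epsilon>_def)
    have eps: "0 < \<epsilon>" using rlim e2 by linarith
    have "\<delta> + \<epsilon> < \<beta>inf * r + \<beta>iinf * \<eta>" using rlim e2 by linarith
    then have "eventually (\<lambda>n. \<delta> + \<epsilon> < \<beta> n * r + \<beta>i n * \<eta>) sequentially"
      by (rule order_tendstoD(1)[OF flim])
    then obtain N where N: "\<And>n. N \<le> n \<Longrightarrow> \<delta> + \<epsilon> < \<beta> n * r + \<beta>i n * \<eta>"
      unfolding eventually_sequentially by blast
    show "\<forall>x. x \<noteq> (\<lambda>_. 0) \<longrightarrow> exp_hit_time \<beta> \<beta>i G \<eta> \<delta> x = \<infinity>"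
    proof (intro allI impI)
      fix x :: "'l \<Rightarrow> nat" assume x: "x \<noteq> (\<lambda>_. 0)"
      show "exp_hit_time \<beta> \<beta>i G \<eta> \<delta> x = \<infinity>"
        by (rule part2[where w = w' and r = r and \<epsilon> = \<epsilon> and N = N and Bb = Bb and Bi = Bi, OF w'pos w'1 w'G r0 eps _ Bb Bi x])
          (use N in \<open>simp add: less_imp_le\<close>)
    qed
  qed
qed

end
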